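(* Let $\Omega\subset\mathbb{R}^n$ be open and $V$ a distribution of $k$-planes on $\Omega$ spanned by $v=v_1\wedge\dots\wedge v_k$ with $v_1,\dots,v_k$ $C^1$ vectorfields, linearly independent at every point. For every $x\in\Omega$ the following are equivalent: (i) $V$ is involutive at $x$; (ii) $[v_i,v_j](x)\in V(x)$ for all $1\le i,j\le k$, or equivalently $\mathrm{div}(v_i\wedge v_j)(x)\in V(x)$ for all $1\le i,j\le k$; (iii) $\mathrm{span}(\mathrm{div}\,v(x))\subset V(x)$; (iv) $v(x)\wedge\big((\mathrm{div}\,v(x))\llcorner\mathrm{d}x_{\mathbf i}\big)=0$ for every multi-index $\mathbf i=(i_1<\dots<i_{k-2})$, where $\mathrm{d}x_{\mathbf i}=\mathrm{d}x_{i_1}\wedge\dots\wedge\mathrm{d}x_{i_{k-2}}$.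
   Context: $[w,w'](x)=\mathrm{d}_xw(w'(x))-\mathrm{d}_xw'(w(x))$. $V$ is involutive at $x$ if $[w,w'](x)\in V(x)$ for all $C^1$ vectorfields $w,w'$ tangent to $V$ (i.e. $w(y),w'(y)\in V(y)$ for all $y$). $\mathrm{span}$ of an $h$-vector $u$ is the smallest subspace $Z$ with $u\in\Lambda_h(Z)$. Interior product: for a $k$-vector $u$ and $h$-covector $\alpha$, $h\le k$, $u\llcorner\alpha$ is the $(k-h)$-vector with $\langle u\llcorner\alpha,\beta\rangle=\langle u,\alpha\wedge\beta\rangle$. Divergence of a $C^1$ $k$-vectorfield: $\mathrm{div}\,v=\sum_j\frac{\partial v}{\partial x_j}\llcorner\mathrm{d}x_j$. *)

theory Defs
  imports "HOL-Analysis.Analysis"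
begin

text \<open>Multivectors (and multi-covectors) on the Euclidean space real^('n::{finite,linorder}) are represented by
their coefficients with respect to the standard basis e_I = e_{i_1} wedge ... wedge e_{i_h},
i_1 < ... < i_h, i.e. as vectors in real^(('n::{finite,linorder}) set). The index type ('n::{finite,linorder}) is finite and linearly
ordered (the order gives the ordering of coordinates).\<close>

type_synonym 'n mvec = "real ^ ('n set)"

definition sgn_pair :: "('n::{finite,linorder}) set \<Rightarrow> ('n::{finite,linorder}) set \<Rightarrow> real" where
  "sgn_pair I J = (-1) ^ card {(i, j). i \<in> I \<and> j \<in> J \<and> j < i}"

definition wedge :: "('n::{finite,linorder}) mvec \<Rightarrow> ('n::{finite,linorder}) mvec \<Rightarrow> ('n::{finite,linorder}) mvec" where
  "wedge u w = (\<chi> K. \<Sum>I\<in>Pow K. u $ I * w $ (K - I) * sgn_pair I (K - I))"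

definition mv_one :: "('n::{finite,linorder}) mvec" where
  "mv_one = (\<chi> I. if I = {} then 1 else 0)"

definition vec_mv :: "real ^ ('n::{finite,linorder}) \<Rightarrow> ('n::{finite,linorder}) mvec" where
  "vec_mv w = (\<chi> I. if card I = 1 then w $ (the_elem I) else 0)"

definition wedge_list :: "('n::{finite,linorder}) mvec list \<Rightarrow> ('n::{finite,linorder}) mvec" where
  "wedge_list us = foldr wedge us mv_one"

definition dx :: "('n::{finite,linorder}) \<Rightarrow> ('n::{finite,linorder}) mvec" where
  "dx i = vec_mv (axis i 1)"

definition dxI :: "('n::{finite,linorder}) set \<Rightarrow> ('n::{finite,linorder}) mvec" where
  "dxI I = wedge_list (map dx (sorted_list_of_set I))"

text \<open>Duality pairing and interior product: the coefficient formula below is exactly the unique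
multivector with  pairing (u interior alpha) beta = pairing u (alpha wedge beta).\<close>
definition pairing :: "('n::{finite,linorder}) mvec \<Rightarrow> ('n::{finite,linorder}) mvec \<Rightarrow> real" where
  "pairing u \<alpha> = (\<Sum>I\<in>UNIV. u $ I * \<alpha> $ I)"

definition mv_interior :: "('n::{finite,linorder}) mvec \<Rightarrow> ('n::{finite,linorder}) mvec \<Rightarrow> ('n::{finite,linorder}) mvec" where
  "mv_interior u \<alpha> = (\<chi> J. \<Sum>I\<in>Pow (UNIV - J). \<alpha> $ I * sgn_pair I J * u $ (I \<union> J))"

definition Lambda :: "nat \<Rightarrow> (real ^ ('n::{finite,linorder})) set \<Rightarrow> ('n::{finite,linorder}) mvec set" where
  "Lambda h Z = span {wedge_list (map vec_mv ws) | ws. length ws = h \<and> set ws \<subseteq> Z}"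

definition mv_span :: "nat \<Rightarrow> ('n::{finite,linorder}) mvec \<Rightarrow> (real ^ ('n::{finite,linorder})) set" where
  "mv_span h u = \<Inter> {Z. subspace Z \<and> u \<in> Lambda h Z}"

definition partial :: "(real ^ ('n::{finite,linorder}) \<Rightarrow> real) \<Rightarrow> ('n::{finite,linorder}) \<Rightarrow> real ^ ('n::{finite,linorder}) \<Rightarrow> real" where
  "partial f j x = frechet_derivative f (at x) (axis j 1)"

definition mv_div :: "(real ^ ('n::{finite,linorder}) \<Rightarrow> ('n::{finite,linorder}) mvec) \<Rightarrow> real ^ ('n::{finite,linorder}) \<Rightarrow> ('n::{finite,linorder}) mvec" where
  "mv_div u x = (\<Sum>j\<in>UNIV. mv_interior (\<chi> I. partial (\<lambda>y. u y $ I) j x) (dx j))"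

definition C1_on :: "(real ^ (('n::{finite,linorder}))) set \<Rightarrow> (real ^ ('n::{finite,linorder}) \<Rightarrow> real ^ ('n::{finite,linorder})) \<Rightarrow> bool" where
  "C1_on S w \<longleftrightarrow> (\<exists>w'. (\<forall>x\<in>S. (w has_derivative blinfun_apply (w' x)) (at x)) \<and> continuous_on S w')"

definition lie_bracket :: "(real ^ (('n::{finite,linorder})) \<Rightarrow> real ^ ('n::{finite,linorder})) \<Rightarrow> (real ^ ('n::{finite,linorder}) \<Rightarrow> real ^ ('n::{finite,linorder})) \<Rightarrow> real ^ ('n::{finite,linorder}) \<Rightarrow> real ^ ('n::{finite,linorder})" where
  "lie_bracket w w' x = frechet_derivative w (at x) (w' x) - frechet_derivative w' (at x) (w x)"

definition involutive_at ::
  "(real ^ (('n::{finite,linorder}))) set \<Rightarrow> (real ^ ('n::{finite,linorder}) \<Rightarrow> (real ^ ('n::{finite,linorder})) set) \<Rightarrow> real ^ ('n::{finite,linorder}) \<Rightarrow> bool" where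
  "involutive_at \<Omega> V x \<longleftrightarrow>
     (\<forall>w w'. C1_on \<Omega> w \<and> C1_on \<Omega> w' \<and> (\<forall>y\<in>\<Omega>. w y \<in> V y \<and> w' y \<in> V y)
        \<longrightarrow> lie_bracket w w' x \<in> V x)"

end

theory Submission
  imports Defs
begin


lemma sgn_pair_Un2:
  assumes "B \<inter> C = {}"
  shows "sgn_pair A (B \<union> C) = sgn_pair A B * sgn_pair A C"
proof -
  have e: "{(i, j). i \<in> A \<and> j \<in> B \<union> C \<and> j < i} =
     {(i, j). i \<in> A \<and> j \<in> B \<and> j < i} \<union> {(i, j). i \<in> A \<and> j \<in> C \<and> j < i}" by auto
  have "card ({(i, j). i \<in> A \<and> j \<in> B \<and> j < i} \<union> {(i, j). i \<in> A \<and> j \<in> C \<and> j < i})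
     = card {(i, j). i \<in> A \<and> j \<in> B \<and> j < i} + card {(i, j). i \<in> A \<and> j \<in> C \<and> j < i}"
    by (rule card_Un_disjoint) (use assms in auto)
  then show ?thesis unfolding sgn_pair_def e by (simp add: power_add)
qed

lemma sgn_pair_Un1:
  assumes "A \<inter> B = {}"
  shows "sgn_pair (A \<union> B) C = sgn_pair A C * sgn_pair B C"
proof -
  have e: "{(i, j). i \<in> A \<union> B \<and> j \<in> C \<and> j < i} =
     {(i, j). i \<in> A \<and> j \<in> C \<and> j < i} \<union> {(i, j). i \<in> B \<and> j \<in> C \<and> j < i}" by auto
  have "card ({(i, j). i \<in> A \<and> j \<in> C \<and> j < i} \<union> {(i, j). i \<in> B \<and> j \<in> C \<and> j < i})
     = card {(i, j). i \<in> A \<and> j \<in> C \<and> j < i} + card {(i, j). i \<in> B \<and> j \<in> C \<and> j < i}"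
    by (rule card_Un_disjoint) (use assms in auto)
  then show ?thesis unfolding sgn_pair_def e by (simp add: power_add)
qed

lemma sgn_pair_sq: "sgn_pair A B * sgn_pair A B = 1"
  by (simp add: sgn_pair_def flip: power_add) 

lemma sgn_pair_empty[simp]: "sgn_pair {} B = 1" "sgn_pair A {} = 1"
  by (simp_all add: sgn_pair_def)

lemma sgn_pair_single_swap:
  fixes p :: "'n::{finite,linorder}"
  assumes "p \<notin> J"
  shows "sgn_pair {p} J * sgn_pair J {p} = (-1) ^ card J"
proof -
  have e1: "{(i, j). i \<in> {p} \<and> j \<in> J \<and> j < i} = (\<lambda>j. (p,j)) ` {j\<in>J. j < p}" by auto
  have e2: "{(i, j). i \<in> J \<and> j \<in> {p} \<and> j < i} = (\<lambda>j. (j,p)) ` {j\<in>J. p < j}" by auto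
  have c1: "card {(i, j). i \<in> {p} \<and> j \<in> J \<and> j < i} = card {j\<in>J. j < p}"
    unfolding e1 by (rule card_image) (auto simp: inj_on_def)
  have c2: "card {(i, j). i \<in> J \<and> j \<in> {p} \<and> j < i} = card {j\<in>J. p < j}"
    unfolding e2 by (rule card_image) (auto simp: inj_on_def)
  have "J = {j\<in>J. j < p} \<union> {j\<in>J. p < j}" using assms by auto (metis linorder_neqE)
  hence "card J = card {j\<in>J. j < p} + card {j\<in>J. p < j}"
    by (metis (no_types, lifting) card_Un_disjoint disjoint_iff finite less_asym mem_Collect_eq)
  then show ?thesis unfolding sgn_pair_def c1 c2 by (simp add: power_add)
qed

lemma sgn_pair_pm: "sgn_pair A B = 1 \<or> sgn_pair A B = -1"
  by (simp add: sgn_pair_def minus_one_power_iff)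



lemma vec_eqI': "(\<And>i. x $ i = y $ i) \<Longrightarrow> x = y" by (simp add: vec_eq_iff)

abbreviation vm :: "real ^ ('n::{finite,linorder}) \<Rightarrow> 'n mvec" where "vm \<equiv> vec_mv"

lemma pow_card1: "{I \<in> Pow K. card I = 1} = (\<lambda>r. {r}) ` K"
  by (auto simp: card_1_singleton_iff)

lemma wedge_vm_left:
  fixes a :: "real ^ ('n::{finite,linorder})"
  shows "wedge (vm a) w $ K = (\<Sum>r\<in>K. a $ r * w $ (K - {r}) * sgn_pair {r} (K - {r}))"
proof -
  have "wedge (vm a) w $ K = (\<Sum>I\<in>Pow K. (if card I = 1 then a $ the_elem I else 0) * w $ (K - I) * sgn_pair I (K - I))"
    by (simp add: wedge_def vec_mv_def)
  also have "\<dots> = (\<Sum>I\<in>(\<lambda>r. {r}) ` K. (if card I = 1 then a $ the_elem I else 0) * w $ (K - I) * sgn_pair I (K - I))"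
    by (rule sum.mono_neutral_right) (auto simp: card_1_singleton_iff)
  also have "\<dots> = (\<Sum>r\<in>K. a $ r * w $ (K - {r}) * sgn_pair {r} (K - {r}))"
    by (subst sum.reindex) (auto simp: inj_on_def)
  finally show ?thesis .
qed

lemma wedge_vm_right:
  fixes z :: "real ^ ('n::{finite,linorder})"
  shows "wedge w (vm z) $ K = (\<Sum>r\<in>K. w $ (K - {r}) * z $ r * sgn_pair (K - {r}) {r})"
proof -
  have "wedge w (vm z) $ K = (\<Sum>I\<in>Pow K. w $ I * (if card (K - I) = 1 then z $ the_elem (K - I) else 0) * sgn_pair I (K - I))"
    by (simp add: wedge_def vec_mv_def)
  also have "\<dots> = (\<Sum>I\<in>(\<lambda>r. K - {r}) ` K. w $ I * (if card (K - I) = 1 then z $ the_elem (K - I) else 0) * sgn_pair I (K - I))"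
  proof (rule sum.mono_neutral_right)
    show "\<forall>i\<in>Pow K - (\<lambda>r. K - {r}) ` K. w $ i * (if card (K - i) = 1 then z $ the_elem (K - i) else 0) * sgn_pair i (K - i) = 0"
    proof
      fix I assume "I \<in> Pow K - (\<lambda>r. K - {r}) ` K"
      then have "card (K - I) \<noteq> 1"
        by (auto simp: card_1_singleton_iff)
      then show "w $ I * (if card (K - I) = 1 then z $ the_elem (K - I) else 0) * sgn_pair I (K - I) = 0" by simp
    qed
  qed auto
  also have "\<dots> = (\<Sum>r\<in>K. w $ (K - {r}) * z $ r * sgn_pair (K - {r}) {r})"
  proof -
    have inj: "inj_on (\<lambda>r. K - {r}) K" by (auto simp: inj_on_def)
    show ?thesis unfolding sum.reindex[OF inj] o_def
      by (rule sum.cong) (auto simp: Diff_Diff_Int Int_absorb1)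
  qed
  finally show ?thesis .
qed

lemma interior_vm:
  fixes \<theta> :: "real ^ ('n::{finite,linorder})"
  shows "mv_interior w (vm \<theta>) $ J = (\<Sum>p\<in>-J. \<theta> $ p * sgn_pair {p} J * w $ (insert p J))"
proof -
  have "mv_interior w (vm \<theta>) $ J = (\<Sum>I\<in>Pow (UNIV - J). (if card I = 1 then \<theta> $ the_elem I else 0) * sgn_pair I J * w $ (I \<union> J))"
    by (simp add: mv_interior_def vec_mv_def)
  also have "\<dots> = (\<Sum>I\<in>(\<lambda>r. {r}) ` (-J). (if card I = 1 then \<theta> $ the_elem I else 0) * sgn_pair I J * w $ (I \<union> J))"
    by (rule sum.mono_neutral_right) (auto simp: card_1_singleton_iff)
  also have "\<dots> = (\<Sum>p\<in>-J. \<theta> $ p * sgn_pair {p} J * w $ (insert p J))"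
    by (subst sum.reindex) (auto simp: inj_on_def)
  finally show ?thesis .
qed

lemma vm_nth: "vm a $ I = (if card I = 1 then a $ the_elem I else 0)"
  by (simp add: vec_mv_def)

lemma mv_one_nth: "mv_one $ I = (if I = {} then 1 else 0)"
  by (simp add: mv_one_def)

lemma wedge_vm_one: "wedge (vm a) mv_one = vm a"
proof (rule vec_eqI')
  fix K :: "'a set"
  show "wedge (vm a) mv_one $ K = vm a $ K"
  proof (cases "card K = 1")
    case True
    then obtain r where K: "K = {r}" by (auto simp: card_1_singleton_iff)
    show ?thesis by (simp add: wedge_vm_left K mv_one_nth vm_nth)
  next
    case False
    have z: "a $ r * mv_one $ (K - {r}) * sgn_pair {r} (K - {r}) = 0" if "r \<in> K" for r
    proof -
      have "K - {r} \<noteq> {}" using False that by (metis card.empty card.insert empty_iff finite.intros(1) insert_Diff One_nat_def)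
      thus ?thesis by (simp add: mv_one_nth)
    qed
    have "(\<Sum>r\<in>K. a $ r * mv_one $ (K - {r}) * sgn_pair {r} (K - {r})) = 0"
      by (rule sum.neutral) (use z in blast)
    then show ?thesis using False by (simp add: wedge_vm_left vm_nth)
  qed
qed

lemma interior_one: "mv_interior mv_one (vm \<theta>) = 0"
  unfolding vec_eq_iff interior_vm mv_one_nth
  by (simp only: insert_not_empty if_False mult_zero_right sum.neutral_const zero_index) simp

lemma wedge_list_single: "wedge_list [vm a] = vm a"
  by (simp add: wedge_list_def wedge_vm_one)

lemma wedge_add_left: "wedge (u + u') w = wedge u w + wedge u' w"
  by (simp add: wedge_def vec_eq_iff sum.distrib algebra_simps)
lemma wedge_add_right: "wedge u (w + w') = wedge u w + wedge u w'"
  by (simp add: wedge_def vec_eq_iff sum.distrib algebra_simps)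
lemma wedge_scale_left: "wedge (c *\<^sub>R u) w = c *\<^sub>R wedge u w"
  by (simp add: wedge_def vec_eq_iff sum_distrib_left algebra_simps)
lemma wedge_scale_right: "wedge u (c *\<^sub>R w) = c *\<^sub>R wedge u w"
  by (simp add: wedge_def vec_eq_iff sum_distrib_left algebra_simps)
lemma wedge_zero[simp]: "wedge 0 w = 0" "wedge u 0 = 0"
  by (simp_all add: wedge_def vec_eq_iff)
lemma wedge_minus_left: "wedge (u - u') w = wedge u w - wedge u' w"
  by (simp add: wedge_def vec_eq_iff sum_subtractf algebra_simps)
lemma wedge_minus_right: "wedge u (w - w') = wedge u w - wedge u w'"
  by (simp add: wedge_def vec_eq_iff sum_subtractf algebra_simps)
lemma wedge_uminus_left: "wedge (- u) w = - wedge u w"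
  by (simp add: wedge_def vec_eq_iff sum_negf)
lemma wedge_uminus_right: "wedge u (- w) = - wedge u w"
  by (simp add: wedge_def vec_eq_iff sum_negf)
lemma wedge_sum_left: "wedge (\<Sum>i\<in>S. f i) w = (\<Sum>i\<in>S. wedge (f i) w)"
  by (induction S rule: infinite_finite_induct) (simp_all add: wedge_add_left)
lemma wedge_sum_right: "wedge u (\<Sum>i\<in>S. f i) = (\<Sum>i\<in>S. wedge u (f i))"
  by (induction S rule: infinite_finite_induct) (simp_all add: wedge_add_right)

lemma interior_add: "mv_interior (u + u') a = mv_interior u a + mv_interior u' a"
  by (simp add: mv_interior_def vec_eq_iff sum.distrib algebra_simps)
lemma interior_add2: "mv_interior u (a + b) = mv_interior u a + mv_interior u b"
  by (simp add: mv_interior_def vec_eq_iff sum.distrib algebra_simps)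
lemma interior_scale: "mv_interior (c *\<^sub>R u) a = c *\<^sub>R mv_interior u a"
  by (simp add: mv_interior_def vec_eq_iff sum_distrib_left algebra_simps)
lemma interior_scale2: "mv_interior u (c *\<^sub>R a) = c *\<^sub>R mv_interior u a"
  by (simp add: mv_interior_def vec_eq_iff sum_distrib_left algebra_simps)
lemma interior_zero[simp]: "mv_interior 0 a = 0" "mv_interior u 0 = 0"
  by (simp_all add: mv_interior_def vec_eq_iff)
lemma interior_minus: "mv_interior (u - u') a = mv_interior u a - mv_interior u' a"
  by (simp add: mv_interior_def vec_eq_iff sum_subtractf algebra_simps)
lemma interior_uminus: "mv_interior (- u) a = - mv_interior u a"
  by (simp add: mv_interior_def vec_eq_iff sum_negf)
lemma interior_sum: "mv_interior (\<Sum>i\<in>S. f i) a = (\<Sum>i\<in>S. mv_interior (f i) a)"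
  by (induction S rule: infinite_finite_induct) (simp_all add: interior_add)

lemma linear_wedge_right: "linear (wedge u)"
  by (rule linearI) (simp_all add: wedge_add_right wedge_scale_right)
lemma linear_wedge_left: "linear (\<lambda>u. wedge u w)"
  by (rule linearI) (simp_all add: wedge_add_left wedge_scale_left)
lemma linear_interior: "linear (\<lambda>u. mv_interior u a)"
  by (rule linearI) (simp_all add: interior_add interior_scale)
lemma linear_vm: "linear vm"
  by (rule linearI) (simp_all add: vec_mv_def vec_eq_iff)

lemma vm_inj: "vm a = vm b \<Longrightarrow> a = b"
proof -
  assume h: "vm a = vm b"
  have "a $ i = b $ i" for i using arg_cong[OF h, of "\<lambda>u. u $ {i}"] by (simp add: vm_nth)
  thus ?thesis by (simp add: vec_eq_iff)
qed



lemma sgn_pair_anti: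
  fixes r s :: "'n::{finite,linorder}"
  assumes "r \<noteq> s" shows "sgn_pair {r} {s} = - sgn_pair {s} {r}"
proof -
  have "sgn_pair {r} {s} * sgn_pair {s} {r} = -1"
    using sgn_pair_single_swap[of r "{s}"] assms by simp
  then show ?thesis using sgn_pair_pm[of "{r}" "{s}"] sgn_pair_pm[of "{s}" "{r}"] by auto
qed

lemma sgn_pair_ins2: "p \<notin> M \<Longrightarrow> sgn_pair A (insert p M) = sgn_pair A {p} * sgn_pair A M"
  using sgn_pair_Un2[of "{p}" M A] by simp

lemma sgn_pair_ins1: "p \<notin> M \<Longrightarrow> sgn_pair (insert p M) A = sgn_pair {p} A * sgn_pair M A"
  using sgn_pair_Un1[of "{p}" M A] by simp

lemma sgn_swap_key:
  fixes r s :: "'n::{finite,linorder}"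
  assumes "r \<noteq> s" "r \<in> K" "s \<in> K"
  shows "sgn_pair {r} (K - {r}) * sgn_pair {s} (K - {r} - {s}) =
         - (sgn_pair {s} (K - {s}) * sgn_pair {r} (K - {s} - {r}))"
proof -
  define M where "M = K - {r} - {s}"
  have M2: "K - {s} - {r} = M" unfolding M_def by auto
  have e1: "K - {r} = insert s M" using assms unfolding M_def by auto
  have e2: "K - {s} = insert r M" using assms unfolding M_def by auto
  have rM: "r \<notin> M" and sM: "s \<notin> M" unfolding M_def by auto
  have a1: "sgn_pair {r} (insert s M) = sgn_pair {r} {s} * sgn_pair {r} M" by (rule sgn_pair_ins2[OF sM])
  have a2: "sgn_pair {s} (insert r M) = sgn_pair {s} {r} * sgn_pair {s} M" by (rule sgn_pair_ins2[OF rM])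
  have "K - {r} - {s} = M" "M - {s} = M" "M - {r} = M" using rM sM unfolding M_def by auto
  then show ?thesis unfolding M2 e1 e2 a1 a2 sgn_pair_anti[OF assms(1)] by simp
qed

lemma wedge_vm_swap:
  "wedge (vm p) (wedge (vm q) X) = - wedge (vm q) (wedge (vm p) X)"
proof (rule vec_eqI')
  fix K :: "'a set"
  define F where "F r s = p $ r * q $ s * X $ (K - {r} - {s}) * (sgn_pair {r} (K - {r}) * sgn_pair {s} (K - {r} - {s}))" for r s
  have L: "wedge (vm p) (wedge (vm q) X) $ K = (\<Sum>r\<in>K. \<Sum>s\<in>K - {r}. F r s)"
    unfolding wedge_vm_left F_def by (simp add: sum_distrib_left sum_distrib_right algebra_simps)
  have R: "wedge (vm q) (wedge (vm p) X) $ K = (\<Sum>s\<in>K. \<Sum>r\<in>K - {s}. - F r s)"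
  proof -
    have "wedge (vm q) (wedge (vm p) X) $ K = (\<Sum>s\<in>K. \<Sum>r\<in>K - {s}. q $ s * p $ r * X $ (K - {s} - {r}) * (sgn_pair {s} (K - {s}) * sgn_pair {r} (K - {s} - {r})))"
      unfolding wedge_vm_left by (simp add: sum_distrib_left sum_distrib_right algebra_simps)
    also have "\<dots> = (\<Sum>s\<in>K. \<Sum>r\<in>K - {s}. - F r s)"
    proof (intro sum.cong refl)
      fix s r assume "s \<in> K" "r \<in> K - {s}"
      then have "sgn_pair {s} (K - {s}) * sgn_pair {r} (K - {s} - {r}) = - (sgn_pair {r} (K - {r}) * sgn_pair {s} (K - {r} - {s}))"
        using sgn_swap_key[of r s K] by auto
      moreover have "K - {s} - {r} = K - {r} - {s}" by auto
      ultimately show "q $ s * p $ r * X $ (K - {s} - {r}) * (sgn_pair {s} (K - {s}) * sgn_pair {r} (K - {s} - {r})) = - F r s"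
        unfolding F_def by simp
    qed
    finally show ?thesis .
  qed
  have sw: "(\<Sum>r\<in>K. \<Sum>s\<in>K - {r}. F r s) = (\<Sum>s\<in>K. \<Sum>r\<in>K - {s}. F r s)"
  proof -
    have "(\<Sum>r\<in>K. \<Sum>s\<in>K - {r}. F r s) = (\<Sum>r\<in>K. \<Sum>s\<in>{s\<in>K. r \<noteq> s}. F r s)"
      by (intro sum.cong refl) auto
    also have "\<dots> = (\<Sum>s\<in>K. \<Sum>r\<in>{r\<in>K. r \<noteq> s}. F r s)"
      by (rule sum.swap_restrict) auto
    also have "\<dots> = (\<Sum>s\<in>K. \<Sum>r\<in>K - {s}. F r s)"
      by (intro sum.cong refl) auto
    finally show ?thesis .
  qed
  show "wedge (vm p) (wedge (vm q) X) $ K = (- wedge (vm q) (wedge (vm p) X)) $ K"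
    by (simp only: vector_uminus_component L R sw) (simp add: sum_negf)
qed

lemma wedge_vm_self: "wedge (vm p) (wedge (vm p) X) = 0"
  using wedge_vm_swap[of p p X] by (simp add: eq_neg_iff_add_eq_0 flip: scaleR_2)

lemma sgn_E_key:
  fixes p r :: "'n::{finite,linorder}"
  assumes "p \<notin> J" "r \<in> J"
  shows "sgn_pair {p} J * sgn_pair {r} (insert p (J - {r})) = - (sgn_pair {r} (J - {r}) * sgn_pair {p} (J - {r}))"
proof -
  have pr: "p \<noteq> r" using assms by auto
  have J: "J = insert r (J - {r})" using assms by auto
  have a1: "sgn_pair {p} (insert r (J - {r})) = sgn_pair {p} {r} * sgn_pair {p} (J - {r})"
    by (rule sgn_pair_ins2) simp
  have a2: "sgn_pair {r} (insert p (J - {r})) = sgn_pair {r} {p} * sgn_pair {r} (J - {r})"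
    by (rule sgn_pair_ins2) (use assms in simp)
  show ?thesis using sgn_pair_sq[of "{r}" "{p}"] by (subst J, unfold a1 a2 sgn_pair_anti[OF pr]) simp
qed

lemma interior_wedge_vm:
  "mv_interior (wedge (vm a) w) (vm \<theta>) = (a \<bullet> \<theta>) *\<^sub>R w - wedge (vm a) (mv_interior w (vm \<theta>))"
proof (rule vec_eqI')
  fix J :: "'a set"
  define G where "G p r = \<theta> $ p * a $ r * w $ (insert p (J - {r})) * (sgn_pair {r} (J - {r}) * sgn_pair {p} (J - {r}))" for p r
  have L: "mv_interior (wedge (vm a) w) (vm \<theta>) $ J = (\<Sum>p\<in>-J. \<theta> $ p * a $ p * w $ J) + (\<Sum>p\<in>-J. \<Sum>r\<in>J. - G p r)"
  proof -
    have "mv_interior (wedge (vm a) w) (vm \<theta>) $ J = (\<Sum>p\<in>-J. \<theta> $ p * sgn_pair {p} J *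
       (\<Sum>r\<in>insert p J. a $ r * w $ (insert p J - {r}) * sgn_pair {r} (insert p J - {r})))"
      by (simp only: interior_vm wedge_vm_left)
    also have "\<dots> = (\<Sum>p\<in>-J. \<theta> $ p * a $ p * w $ J + (\<Sum>r\<in>J. - G p r))"
    proof (rule sum.cong[OF refl])
      fix p assume p: "p \<in> - J"
      have pJ: "p \<notin> J" using p by simp
      have "(\<Sum>r\<in>insert p J. a $ r * w $ (insert p J - {r}) * sgn_pair {r} (insert p J - {r}))
         = a $ p * w $ J * sgn_pair {p} J + (\<Sum>r\<in>J. a $ r * w $ (insert p J - {r}) * sgn_pair {r} (insert p J - {r}))"
        using pJ by (simp add: sum.insert)
      also have "(\<Sum>r\<in>J. a $ r * w $ (insert p J - {r}) * sgn_pair {r} (insert p J - {r}))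
          = (\<Sum>r\<in>J. a $ r * w $ (insert p (J - {r})) * sgn_pair {r} (insert p (J - {r})))"
        by (rule sum.cong[OF refl]) (use pJ in \<open>auto simp: insert_Diff_if\<close>)
      finally have e: "(\<Sum>r\<in>insert p J. a $ r * w $ (insert p J - {r}) * sgn_pair {r} (insert p J - {r}))
         = a $ p * w $ J * sgn_pair {p} J + (\<Sum>r\<in>J. a $ r * w $ (insert p (J - {r})) * sgn_pair {r} (insert p (J - {r})))" .
      have "\<theta> $ p * sgn_pair {p} J * (\<Sum>r\<in>J. a $ r * w $ (insert p (J - {r})) * sgn_pair {r} (insert p (J - {r})))
          = (\<Sum>r\<in>J. - G p r)"
        unfolding sum_distrib_left
      proof (rule sum.cong[OF refl])
        fix r assume r: "r \<in> J"
        show "\<theta> $ p * sgn_pair {p} J * (a $ r * w $ insert p (J - {r}) * sgn_pair {r} (insert p (J - {r}))) = - G p r"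
          unfolding G_def using sgn_E_key[OF pJ r] by (simp add: algebra_simps)
      qed
      moreover have "\<theta> $ p * sgn_pair {p} J * (a $ p * w $ J * sgn_pair {p} J) = \<theta> $ p * a $ p * w $ J"
        using sgn_pair_sq[of "{p}" J] by (simp add: algebra_simps)
      ultimately show "\<theta> $ p * sgn_pair {p} J * (\<Sum>r\<in>insert p J. a $ r * w $ (insert p J - {r}) * sgn_pair {r} (insert p J - {r}))
          = \<theta> $ p * a $ p * w $ J + (\<Sum>r\<in>J. - G p r)"
        unfolding e by (simp add: distrib_left)
    qed
    also have "\<dots> = (\<Sum>p\<in>-J. \<theta> $ p * a $ p * w $ J) + (\<Sum>p\<in>-J. \<Sum>r\<in>J. - G p r)"
      by (rule sum.distrib)
    finally show ?thesis .
  qed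
  have R: "((a \<bullet> \<theta>) *\<^sub>R w - wedge (vm a) (mv_interior w (vm \<theta>))) $ J =
     (a \<bullet> \<theta>) * w $ J - (\<Sum>r\<in>J. a $ r * \<theta> $ r * w $ J) - (\<Sum>r\<in>J. \<Sum>p\<in>-J. G p r)"
  proof -
    have "wedge (vm a) (mv_interior w (vm \<theta>)) $ J = (\<Sum>r\<in>J. a $ r * (\<Sum>p\<in>-(J - {r}). \<theta> $ p * sgn_pair {p} (J - {r}) * w $ (insert p (J - {r}))) * sgn_pair {r} (J - {r}))"
      by (simp only: interior_vm wedge_vm_left)
    also have "\<dots> = (\<Sum>r\<in>J. a $ r * \<theta> $ r * w $ J + (\<Sum>p\<in>-J. G p r))"
    proof (rule sum.cong[OF refl])
      fix r assume r: "r \<in> J"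
      have c: "-(J - {r}) = insert r (-J)" using r by auto
      have "(\<Sum>p\<in>-(J - {r}). \<theta> $ p * sgn_pair {p} (J - {r}) * w $ (insert p (J - {r})))
          = \<theta> $ r * sgn_pair {r} (J - {r}) * w $ J + (\<Sum>p\<in>-J. \<theta> $ p * sgn_pair {p} (J - {r}) * w $ (insert p (J - {r})))"
        unfolding c using r by (simp add: sum.insert insert_absorb)
      then show "a $ r * (\<Sum>p\<in>-(J - {r}). \<theta> $ p * sgn_pair {p} (J - {r}) * w $ (insert p (J - {r}))) * sgn_pair {r} (J - {r})
          = a $ r * \<theta> $ r * w $ J + (\<Sum>p\<in>-J. G p r)"
        using sgn_pair_sq[of "{r}" "J - {r}"]
        by (simp add: G_def distrib_left distrib_right sum_distrib_left sum_distrib_right algebra_simps)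
    qed
    also have "\<dots> = (\<Sum>r\<in>J. a $ r * \<theta> $ r * w $ J) + (\<Sum>r\<in>J. \<Sum>p\<in>-J. G p r)"
      by (rule sum.distrib)
    finally show ?thesis by simp
  qed
  have dot: "a \<bullet> \<theta> = (\<Sum>p\<in>J. a $ p * \<theta> $ p) + (\<Sum>p\<in>-J. a $ p * \<theta> $ p)"
    using sum.union_disjoint[of J "-J" "\<lambda>p. a$p*\<theta>$p"] by (simp add: inner_vec_def)
  have sw: "(\<Sum>r\<in>J. \<Sum>p\<in>-J. G p r) = (\<Sum>p\<in>-J. \<Sum>r\<in>J. G p r)" by (rule sum.swap)
  show "mv_interior (wedge (vm a) w) (vm \<theta>) $ J = ((a \<bullet> \<theta>) *\<^sub>R w - wedge (vm a) (mv_interior w (vm \<theta>))) $ J"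
    unfolding L R unfolding dot sw by (simp add: sum_negf sum_distrib_right sum_distrib_left algebra_simps)
qed



definition aw :: "(nat \<Rightarrow> real ^ ('n::{finite,linorder})) \<Rightarrow> nat list \<Rightarrow> 'n mvec" where
  "aw g xs = wedge_list (map (\<lambda>i. vm (g i)) xs)"

lemma aw_Nil[simp]: "aw g [] = mv_one" by (simp add: aw_def wedge_list_def)
lemma aw_Cons[simp]: "aw g (i # xs) = wedge (vm (g i)) (aw g xs)" by (simp add: aw_def wedge_list_def)

lemma aw_interior_zero:
  assumes "\<forall>i\<in>set xs. g i \<bullet> \<theta> = 0"
  shows "mv_interior (aw g xs) (vm \<theta>) = 0"
  using assms by (induction xs) (simp_all add: interior_one interior_wedge_vm)

lemma Lambda_subspace: "subspace (Lambda h Z)"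
  by (simp add: Lambda_def subspace_span)

lemma aw_Lambda: "g ` set xs \<subseteq> Z \<Longrightarrow> aw g xs \<in> Lambda (length xs) Z"
  unfolding Lambda_def aw_def
  by (rule span_base) (auto intro!: exI[of _ "map g xs"] simp: o_def)

lemma wedge_Lambda:
  assumes z: "z \<in> Z" and u: "u \<in> Lambda h Z"
  shows "wedge (vm z) u \<in> Lambda (Suc h) Z"
proof -
  let ?S = "{wedge_list (map vm ws) | ws. length ws = h \<and> set ws \<subseteq> Z}"
  have "wedge (vm z) ` span ?S = span (wedge (vm z) ` ?S)"
    by (rule linear_span_image[symmetric]) (rule linear_wedge_right)
  also have "\<dots> \<subseteq> Lambda (Suc h) Z"
    unfolding Lambda_def
  proof (rule span_mono, clarify)
    fix ws assume "h = length ws" "set ws \<subseteq> Z"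
    then show "\<exists>ws'. wedge (vm z) (wedge_list (map vm ws)) = wedge_list (map vm ws') \<and> length ws' = Suc (length ws) \<and> set ws' \<subseteq> Z"
      using z by (intro exI[of _ "z # ws"]) (simp add: wedge_list_def)
  qed
  finally show ?thesis using u unfolding Lambda_def by blast
qed

lemma Lambda_interior_zero:
  assumes "\<forall>z\<in>Z. z \<bullet> \<theta> = 0" and u: "u \<in> Lambda h Z"
  shows "mv_interior u (vm \<theta>) = 0"
proof -
  have ws: "mv_interior (wedge_list (map vm ws)) (vm \<theta>) = 0" if "set ws \<subseteq> Z" for ws
    using that assms(1) by (induction ws) (auto simp: wedge_list_def interior_one interior_wedge_vm)
  show ?thesis
    by (rule linear_eq_0_on_span[OF linear_interior _ u[unfolded Lambda_def]]) (use ws in auto)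
qed

lemma mv_span_le: "subspace V \<Longrightarrow> u \<in> Lambda h V \<Longrightarrow> mv_span h u \<subseteq> V"
  unfolding mv_span_def by blast

definition dual_on :: "(nat \<Rightarrow> real ^ ('n::{finite,linorder})) \<Rightarrow> nat set \<Rightarrow> bool" where
  "dual_on g S \<longleftrightarrow> (\<forall>p\<in>S. \<exists>\<theta>. g p \<bullet> \<theta> = 1 \<and> (\<forall>q\<in>S. q \<noteq> p \<longrightarrow> g q \<bullet> \<theta> = 0))"

lemma dual_on_mono: "dual_on g S \<Longrightarrow> T \<subseteq> S \<Longrightarrow> dual_on g T"
  unfolding dual_on_def by blast

lemma mv_one_nz: "mv_one \<noteq> (0 :: ('n::{finite,linorder}) mvec)"
proof
  assume h: "mv_one = (0 :: 'n mvec)"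
  have "mv_one $ ({} :: 'n set) = 1" by (simp add: mv_one_nth)
  with h show False by simp
qed

lemma aw_nonzero:
  assumes "distinct xs" "dual_on g (set xs)"
  shows "aw g xs \<noteq> 0"
  using assms
proof (induction xs)
  case Nil then show ?case by (simp add: mv_one_nz)
next
  case (Cons p ps)
  obtain \<theta> where th: "g p \<bullet> \<theta> = 1" "\<forall>q\<in>set (p # ps). q \<noteq> p \<longrightarrow> g q \<bullet> \<theta> = 0"
    using Cons.prems(2) unfolding dual_on_def by force
  have z: "\<forall>q\<in>set ps. g q \<bullet> \<theta> = 0" using th(2) Cons.prems(1) by auto
  have "mv_interior (aw g (p # ps)) (vm \<theta>) = aw g ps"
    using aw_interior_zero[OF z] th(1) by (simp add: interior_wedge_vm)
  moreover have "aw g ps \<noteq> 0"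
    using Cons.IH Cons.prems dual_on_mono[of g "set (p # ps)" "set ps"] by auto
  ultimately show ?case by auto
qed

fun om :: "(nat \<Rightarrow> real) \<Rightarrow> (nat \<Rightarrow> real ^ ('n::{finite,linorder})) \<Rightarrow> nat list \<Rightarrow> 'n mvec" where
  "om f g [] = 0"
| "om f g (i # xs) = f i *\<^sub>R aw g xs - wedge (vm (g i)) (om f g xs)"

fun om' :: "(nat \<Rightarrow> real ^ ('n::{finite,linorder})) \<Rightarrow> (nat \<Rightarrow> real ^ ('n::{finite,linorder})) \<Rightarrow> nat list \<Rightarrow> 'n mvec" where
  "om' F g [] = 0"
| "om' F g (i # xs) = wedge (vm (F i)) (aw g xs) + wedge (vm (g i)) (om' F g xs)"

lemma om_Lambda: "g ` set xs \<subseteq> Z \<Longrightarrow> om f g xs \<in> Lambda (length xs - 1) Z"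
proof (induction xs)
  case Nil then show ?case by (simp add: subspace_0[OF Lambda_subspace])
next
  case (Cons i xs)
  show ?case
  proof (cases xs)
    case Nil then show ?thesis
      using aw_Lambda[of g "[]" Z] by (simp add: subspace_scale[OF Lambda_subspace])
  next
    case (Cons j js)
    have "om f g xs \<in> Lambda (length xs - 1) Z" using Cons.IH Cons.prems by auto
    then have "wedge (vm (g i)) (om f g xs) \<in> Lambda (Suc (length xs - 1)) Z"
      using Cons.prems by (intro wedge_Lambda) auto
    moreover have "aw g xs \<in> Lambda (length xs) Z" using Cons.prems by (intro aw_Lambda) auto
    ultimately show ?thesis using \<open>xs = j # js\<close>
      by (simp add: subspace_diff[OF Lambda_subspace] subspace_scale[OF Lambda_subspace])
  qed
qed

lemma om'_Lambda: "g ` set xs \<subseteq> Z \<Longrightarrow> F ` set xs \<subseteq> Z \<Longrightarrow> om' F g xs \<in> Lambda (length xs) Z"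
proof (induction xs)
  case Nil then show ?case by (simp add: subspace_0[OF Lambda_subspace])
next
  case (Cons i xs)
  have "wedge (vm (F i)) (aw g xs) \<in> Lambda (Suc (length xs)) Z"
    using Cons.prems by (intro wedge_Lambda aw_Lambda) auto
  moreover have "wedge (vm (g i)) (om' F g xs) \<in> Lambda (Suc (length xs)) Z"
    using Cons by (intro wedge_Lambda) auto
  ultimately show ?case by (simp add: subspace_add[OF Lambda_subspace])
qed

lemma om_zero: "\<forall>i\<in>set xs. f i = 0 \<Longrightarrow> om f g xs = 0"
  by (induction xs) auto

lemma om'_interior:
  assumes "\<forall>i\<in>set xs. g i \<bullet> \<gamma> = 0"
  shows "mv_interior (om' F g xs) (vm \<gamma>) = om (\<lambda>i. F i \<bullet> \<gamma>) g xs"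
  using assms
proof (induction xs)
  case Nil then show ?case by simp
next
  case (Cons i xs)
  then show ?case
    by (simp add: interior_add interior_wedge_vm aw_interior_zero)
qed

lemma om_indep:
  assumes "distinct xs" "dual_on g (set xs)" "om f g xs = 0"
  shows "\<forall>i\<in>set xs. f i = 0"
  using assms
proof (induction xs)
  case Nil then show ?case by simp
next
  case (Cons p ps)
  obtain \<theta> where th: "g p \<bullet> \<theta> = 1" "\<forall>q\<in>set (p # ps). q \<noteq> p \<longrightarrow> g q \<bullet> \<theta> = 0"
    using Cons.prems(2) unfolding dual_on_def by force
  have z: "\<forall>q\<in>set ps. g q \<bullet> \<theta> = 0" using th(2) Cons.prems(1) by auto
  have zz: "\<forall>y\<in>g ` set ps. y \<bullet> \<theta> = 0" using z by auto
  have omi: "mv_interior (om f g ps) (vm \<theta>) = 0"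
    by (rule Lambda_interior_zero[OF zz om_Lambda]) simp
  have "mv_interior (om f g (p # ps)) (vm \<theta>) = - om f g ps"
    using aw_interior_zero[OF z] th(1) omi
    by (simp add: interior_minus interior_scale interior_wedge_vm)
  then have o0: "om f g ps = 0" using Cons.prems(3) by simp
  have dps: "dual_on g (set ps)" using Cons.prems(2) dual_on_mono by (metis set_subset_Cons)
  have ih: "\<forall>i\<in>set ps. f i = 0" using Cons.IH Cons.prems(1) dps o0 by auto
  have "f p *\<^sub>R aw g ps = 0" using Cons.prems(3) o0 by simp
  moreover have "aw g ps \<noteq> 0" using aw_nonzero Cons.prems(1) dps by auto
  ultimately have "f p = 0" by simp
  with ih show ?case by simp
qed



definition homog :: "nat \<Rightarrow> ('n::{finite,linorder}) mvec \<Rightarrow> bool" where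
  "homog d u \<longleftrightarrow> (\<forall>K. card K \<noteq> d \<longrightarrow> u $ K = 0)"

lemma homog_wedge_vm:
  assumes "homog d u" shows "homog (Suc d) (wedge (vm a) u)"
  unfolding homog_def
proof (intro allI impI)
  fix K :: "'a set" assume K: "card K \<noteq> Suc d"
  have "a $ r * u $ (K - {r}) * sgn_pair {r} (K - {r}) = 0" if "r \<in> K" for r
  proof -
    have "card (K - {r}) = card K - 1" using that by simp
    moreover have "card K \<ge> 1" using that by (auto simp: Suc_le_eq card_gt_0_iff)
    ultimately have "card (K - {r}) \<noteq> d" using K by linarith
    then show ?thesis using assms unfolding homog_def by simp
  qed
  then show "wedge (vm a) u $ K = 0" unfolding wedge_vm_left by (intro sum.neutral) blast
qed

lemma homog_one: "homog 0 mv_one"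
  by (simp add: homog_def mv_one_nth)

lemma homog_aw: "homog (length xs) (aw g xs)"
  by (induction xs) (simp_all add: homog_one homog_wedge_vm)

lemma homog_interior:
  assumes "homog d u" shows "homog (d - 1) (mv_interior u (vm \<theta>))"
  unfolding homog_def
proof (intro allI impI)
  fix J :: "'a set" assume J: "card J \<noteq> d - 1"
  have "\<theta> $ p * sgn_pair {p} J * u $ (insert p J) = 0" if "p \<in> -J" for p
  proof -
    have "card (insert p J) = Suc (card J)" using that by simp
    then have "card (insert p J) \<noteq> d" using J by linarith
    then show ?thesis using assms unfolding homog_def by simp
  qed
  then show "mv_interior u (vm \<theta>) $ J = 0" unfolding interior_vm by (intro sum.neutral) blast
qed

lemma homog_add: "homog d u \<Longrightarrow> homog d w \<Longrightarrow> homog d (u + w)"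
  by (simp add: homog_def)
lemma homog_diff: "homog d u \<Longrightarrow> homog d w \<Longrightarrow> homog d (u - w)"
  by (simp add: homog_def)
lemma homog_scale: "homog d u \<Longrightarrow> homog d (c *\<^sub>R u)"
  by (simp add: homog_def)
lemma homog_zero: "homog d 0"
  by (simp add: homog_def)
lemma homog_sum: "(\<And>i. i \<in> S \<Longrightarrow> homog d (f i)) \<Longrightarrow> homog d (\<Sum>i\<in>S. f i)"
  by (induction S rule: infinite_finite_induct) (simp_all add: homog_zero homog_add)

lemma dx_list_nth:
  assumes "sorted_wrt (<) xs"
  shows "wedge_list (map dx xs) $ J = (if J = set xs then 1 else 0)"
  using assms
proof (induction xs arbitrary: J)
  case Nil then show ?case by (simp add: wedge_list_def mv_one_nth)
next
  case (Cons x ys)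
  have xy: "\<forall>y\<in>set ys. x < y" and sy: "sorted_wrt (<) ys" using Cons.prems by auto
  have xn: "x \<notin> set ys" using xy by auto
  have s1: "sgn_pair {x} (set ys) = 1"
  proof -
    have e: "{(i, j). i \<in> {x} \<and> j \<in> set ys \<and> j < i} = {}" using xy by auto
    show ?thesis unfolding sgn_pair_def e by simp
  qed
  have "wedge_list (map dx (x # ys)) $ J = (\<Sum>r\<in>J. axis x 1 $ r * wedge_list (map dx ys) $ (J - {r}) * sgn_pair {r} (J - {r}))"
    by (simp add: wedge_list_def dx_def wedge_vm_left)
  also have "\<dots> = (if x \<in> J then wedge_list (map dx ys) $ (J - {x}) * sgn_pair {x} (J - {x}) else 0)"
    by (simp add: axis_def if_distrib if_distribR sum.delta cong: if_cong)
  also have "\<dots> = (if J = set (x # ys) then 1 else 0)"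
    using Cons.IH[OF sy] s1 xn by auto
  finally show ?case .
qed

lemma dxI_nth: "dxI I $ J = (if J = I then 1 else 0)"
  unfolding dxI_def
  by (subst dx_list_nth) (simp_all add: strict_sorted_list_of_set)

definition zc :: "('n::{finite,linorder}) mvec \<Rightarrow> ('n::{finite,linorder}) set \<Rightarrow> real ^ ('n::{finite,linorder})" where
  "zc u J = (\<chi> p. mv_interior u (dxI J) $ {p})"

lemma interior_dxI_nth:
  "mv_interior u (dxI J) $ K = (if J \<inter> K = {} then sgn_pair J K * u $ (J \<union> K) else 0)"
proof -
  have "mv_interior u (dxI J) $ K = (\<Sum>I\<in>Pow (UNIV - K). if I = J then sgn_pair J K * u $ (J \<union> K) else 0)"
    unfolding mv_interior_def dxI_nth vec_lambda_beta by (intro sum.cong) auto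
  also have "\<dots> = (if J \<in> Pow (UNIV - K) then sgn_pair J K * u $ (J \<union> K) else 0)"
    by (rule sum.delta) simp
  also have "(J \<in> Pow (UNIV - K)) = (J \<inter> K = {})" by auto
  finally show ?thesis .
qed

lemma sgn_pair_single_swap':
  fixes p :: "'n::{finite,linorder}"
  assumes "p \<notin> J"
  shows "sgn_pair {p} J = (-1) ^ card J * sgn_pair J {p}"
proof -
  have "sgn_pair {p} J * sgn_pair J {p} * sgn_pair J {p} = (-1) ^ card J * sgn_pair J {p}"
    using sgn_pair_single_swap[OF assms] by simp
  then show ?thesis using sgn_pair_sq[of J "{p}"] by (simp add: mult.assoc)
qed

lemma interior_gamma:
  "mv_interior u (vm \<gamma>) $ J = (-1) ^ card J * (\<gamma> \<bullet> zc u J)"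
proof -
  have "\<gamma> \<bullet> zc u J = (\<Sum>p\<in>UNIV. \<gamma> $ p * (if J \<inter> {p} = {} then sgn_pair J {p} * u $ (J \<union> {p}) else 0))"
    unfolding inner_vec_def zc_def vec_lambda_beta interior_dxI_nth inner_real_def ..
  also have "\<dots> = (\<Sum>p\<in>-J. \<gamma> $ p * (if J \<inter> {p} = {} then sgn_pair J {p} * u $ (J \<union> {p}) else 0))"
    by (rule sum.mono_neutral_right) auto
  also have "\<dots> = (\<Sum>p\<in>-J. \<gamma> $ p * sgn_pair J {p} * u $ (insert p J))"
    by (intro sum.cong refl) auto
  finally have e: "\<gamma> \<bullet> zc u J = (\<Sum>p\<in>-J. \<gamma> $ p * sgn_pair J {p} * u $ (insert p J))" .
  show ?thesis unfolding interior_vm e sum_distrib_left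
    by (intro sum.cong refl) (simp add: sgn_pair_single_swap')
qed

lemma interior_dxI_vm:
  assumes "homog (Suc (card J)) u"
  shows "mv_interior u (dxI J) = vm (zc u J)"
proof (rule vec_eqI')
  fix K :: "'a set"
  show "mv_interior u (dxI J) $ K = vm (zc u J) $ K"
  proof (cases "card K = 1")
    case True
    then obtain p where K: "K = {p}" by (auto simp: card_1_singleton_iff)
    show ?thesis by (simp add: K vm_nth zc_def)
  next
    case False
    have "u $ (J \<union> K) = 0" if "J \<inter> K = {}"
    proof -
      have "card (J \<union> K) = card J + card K" using that by (simp add: card_Un_disjoint)
      then have "card (J \<union> K) \<noteq> Suc (card J)" using False by simp
      then show ?thesis using assms unfolding homog_def by simp
    qed
    then show ?thesis using False by (simp add: interior_dxI_nth vm_nth)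
  qed
qed

lemma wedge_right_comm:
  assumes "homog d w"
  shows "wedge w (vm z) = (-1) ^ d *\<^sub>R wedge (vm z) w"
proof (rule vec_eqI')
  fix K :: "'a set"
  have "w $ (K - {r}) * z $ r * sgn_pair (K - {r}) {r} = (-1) ^ d * (z $ r * w $ (K - {r}) * sgn_pair {r} (K - {r}))"
    if "r \<in> K" for r
  proof (cases "card (K - {r}) = d")
    case True
    have "sgn_pair {r} (K - {r}) = (-1) ^ d * sgn_pair (K - {r}) {r}"
      using sgn_pair_single_swap'[of r "K - {r}"] True by simp
    then show ?thesis using sgn_pair_sq[of "K - {r}" "{r}"] by (simp add: algebra_simps)
  next
    case False
    then show ?thesis using assms unfolding homog_def by simp
  qed
  then show "wedge w (vm z) $ K = ((-1) ^ d *\<^sub>R wedge (vm z) w) $ K"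
    unfolding wedge_vm_right vector_scaleR_component wedge_vm_left real_scaleR_def sum_distrib_left
    by (intro sum.cong refl) auto
qed

lemma wedge_vm_aw_mem: "i \<in> set xs \<Longrightarrow> wedge (vm (g i)) (aw g xs) = 0"
proof (induction xs)
  case Nil then show ?case by simp
next
  case (Cons j ys)
  show ?case
  proof (cases "i = j")
    case True then show ?thesis by (simp add: wedge_vm_self)
  next
    case False
    then have "i \<in> set ys" using Cons.prems by simp
    then show ?thesis using Cons.IH by (simp add: wedge_vm_swap[of "g i"])
  qed
qed

lemma linear_wedge_vm_left: "linear (\<lambda>z. wedge (vm z) X)"
  using linear_compose[OF linear_vm linear_wedge_left[of X]] by (simp add: o_def)

lemma wedge_vm_aw_span:
  assumes "z \<in> span (g ` set xs)" shows "wedge (vm z) (aw g xs) = 0"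
  by (rule linear_eq_0_on_span[OF linear_wedge_vm_left _ assms]) (auto intro: wedge_vm_aw_mem)

lemma aw_wedge_span:
  assumes "z \<in> span (g ` set xs)" shows "wedge (aw g xs) (vm z) = 0"
  using wedge_right_comm[OF homog_aw, of g xs z] wedge_vm_aw_span[OF assms] by simp

lemma span_image_sum:
  assumes "x \<in> span (g ` T)" "finite T"
  shows "\<exists>c. x = (\<Sum>q\<in>T. c q *\<^sub>R g q)"
proof -
  have "subspace {x. \<exists>c. x = (\<Sum>q\<in>T. c q *\<^sub>R g q)}"
    unfolding subspace_def
  proof (intro conjI ballI allI)
    show "0 \<in> {x. \<exists>c. x = (\<Sum>q\<in>T. c q *\<^sub>R g q)}" by (auto intro: exI[of _ "\<lambda>_. 0"])
  next
    fix x y assume "x \<in> {x. \<exists>c. x = (\<Sum>q\<in>T. c q *\<^sub>R g q)}" "y \<in> {x. \<exists>c. x = (\<Sum>q\<in>T. c q *\<^sub>R g q)}"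
    then obtain c d where "x = (\<Sum>q\<in>T. c q *\<^sub>R g q)" "y = (\<Sum>q\<in>T. d q *\<^sub>R g q)" by auto
    then show "x + y \<in> {x. \<exists>c. x = (\<Sum>q\<in>T. c q *\<^sub>R g q)}"
      by (auto intro!: exI[of _ "\<lambda>q. c q + d q"] simp: sum.distrib scaleR_add_left)
  next
    fix a x assume "x \<in> {x. \<exists>c. x = (\<Sum>q\<in>T. c q *\<^sub>R g q)}"
    then obtain c where "x = (\<Sum>q\<in>T. c q *\<^sub>R g q)" by auto
    then show "a *\<^sub>R x \<in> {x. \<exists>c. x = (\<Sum>q\<in>T. c q *\<^sub>R g q)}"
      by (auto intro!: exI[of _ "\<lambda>q. a * c q"] simp: scaleR_sum_right)
  qed
  moreover have "g ` T \<subseteq> {x. \<exists>c. x = (\<Sum>q\<in>T. c q *\<^sub>R g q)}"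
  proof clarify
    fix p assume p: "p \<in> T"
    show "\<exists>c. g p = (\<Sum>q\<in>T. c q *\<^sub>R g q)"
      by (rule exI[of _ "\<lambda>q. if q = p then 1 else 0"]) (simp add: p assms(2) if_distrib if_distribR sum.delta cong: if_cong)
  qed
  ultimately show ?thesis using assms(1) span_minimal by blast
qed

lemma orth_complement_mem:
  fixes b :: "'a::euclidean_space"
  assumes "subspace V" "\<And>\<gamma>. (\<forall>z\<in>V. z \<bullet> \<gamma> = 0) \<Longrightarrow> b \<bullet> \<gamma> = 0"
  shows "b \<in> V"
proof -
  obtain y z where y: "y \<in> span V" and z: "\<And>w. w \<in> span V \<Longrightarrow> orthogonal z w" and b: "b = y + z"
    using orthogonal_subspace_decomp_exists[of V b] by blast
  have "\<forall>w\<in>V. w \<bullet> z = 0" using z span_base unfolding orthogonal_def by (simp add: inner_commute) blast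
  then have "b \<bullet> z = 0" using assms(2) by blast
  moreover have "y \<bullet> z = 0" using z[OF y] by (simp add: orthogonal_def inner_commute)
  ultimately have "z \<bullet> z = 0" using b by (simp add: inner_add_left)
  then have "z = 0" by simp
  then show ?thesis using b y assms(1) by (simp add: span_eq_iff[THEN iffD2])
qed

lemma dual_exists:
  assumes indep: "\<forall>c. (\<Sum>i\<in>S. c i *\<^sub>R g i) = 0 \<longrightarrow> (\<forall>i\<in>S. c i = 0)" and fin: "finite S"
  shows "dual_on g S"
  unfolding dual_on_def
proof
  fix p assume p: "p \<in> S"
  have nsp: "g p \<notin> span (g ` (S - {p}))"
  proof
    assume "g p \<in> span (g ` (S - {p}))"
    then obtain c where c: "g p = (\<Sum>q\<in>S - {p}. c q *\<^sub>R g q)" using span_image_sum fin by blast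
    define c' where "c' q = (if q = p then -1 else c q)" for q
    have "(\<Sum>q\<in>S. c' q *\<^sub>R g q) = c' p *\<^sub>R g p + (\<Sum>q\<in>S - {p}. c' q *\<^sub>R g q)"
      using p fin by (simp add: sum.remove)
    also have "(\<Sum>q\<in>S - {p}. c' q *\<^sub>R g q) = (\<Sum>q\<in>S - {p}. c q *\<^sub>R g q)"
      by (intro sum.cong) (auto simp: c'_def)
    finally have "(\<Sum>q\<in>S. c' q *\<^sub>R g q) = 0" using c by (simp add: c'_def)
    then have "c' p = 0" using indep p by blast
    then show False by (simp add: c'_def)
  qed
  obtain y z where y: "y \<in> span (g ` (S - {p}))" and z: "\<And>w. w \<in> span (g ` (S - {p})) \<Longrightarrow> orthogonal z w"
    and gp: "g p = y + z"
    using orthogonal_subspace_decomp_exists[of "g ` (S - {p})" "g p"] by blast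
  have "z \<noteq> 0" using gp y nsp by auto
  then have zz: "z \<bullet> z \<noteq> 0" by simp
  have yz: "y \<bullet> z = 0" using z[OF y] by (simp add: orthogonal_def inner_commute)
  define \<theta> where "\<theta> = (1 / (z \<bullet> z)) *\<^sub>R z"
  have "g p \<bullet> \<theta> = 1" unfolding \<theta>_def gp using yz zz by (simp add: inner_add_left)
  moreover have "\<forall>q\<in>S. q \<noteq> p \<longrightarrow> g q \<bullet> \<theta> = 0"
  proof (intro ballI impI)
    fix q assume "q \<in> S" "q \<noteq> p"
    then have "g q \<in> span (g ` (S - {p}))" by (intro span_base) auto
    then have "z \<bullet> g q = 0" using z by (simp add: orthogonal_def)
    then show "g q \<bullet> \<theta> = 0" unfolding \<theta>_def by (simp add: inner_commute)
  qed
  ultimately show "\<exists>\<theta>. g p \<bullet> \<theta> = 1 \<and> (\<forall>q\<in>S. q \<noteq> p \<longrightarrow> g q \<bullet> \<theta> = 0)" by blast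
qed



lemma bb_wedge: "bounded_bilinear (wedge :: ('n::{finite,linorder}) mvec \<Rightarrow> 'n mvec \<Rightarrow> 'n mvec)"
  unfolding bilinear_conv_bounded_bilinear[symmetric] bilinear_def
  using linear_wedge_right linear_wedge_left by blast

lemma bl_vm: "bounded_linear (vm :: real ^ ('n::{finite,linorder}) \<Rightarrow> 'n mvec)"
  using linear_vm linear_conv_bounded_linear by blast

lemma has_derivative_wedge:
  "(F has_derivative F') (at x) \<Longrightarrow> (G has_derivative G') (at x) \<Longrightarrow>
   ((\<lambda>y. wedge (F y) (G y)) has_derivative (\<lambda>h. wedge (F x) (G' h) + wedge (F' h) (G x))) (at x)"
  by (rule bounded_bilinear.FDERIV[OF bb_wedge])

lemma has_derivative_vm:
  "(a has_derivative a') (at x) \<Longrightarrow> ((\<lambda>y. vm (a y)) has_derivative (\<lambda>h. vm (a' h))) (at x)"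
  by (rule bounded_linear.has_derivative[OF bl_vm])

abbreviation FD where "FD f x \<equiv> frechet_derivative f (at x)"

lemma FD_works: "f differentiable (at x) \<Longrightarrow> (f has_derivative FD f x) (at x)"
  using frechet_derivative_works by blast

lemma FD_eq: "(f has_derivative f') (at x) \<Longrightarrow> FD f x = f'"
  using frechet_derivative_at by metis

lemma FD_linear: "f differentiable (at x) \<Longrightarrow> linear (FD f x)"
  using FD_works has_derivative_linear by blast

lemma diff_wedge:
  assumes "F differentiable (at x)" "G differentiable (at x)"
  shows "(\<lambda>y. wedge (F y) (G y)) differentiable (at x)"
    and "FD (\<lambda>y. wedge (F y) (G y)) x h = wedge (F x) (FD G x h) + wedge (FD F x h) (G x)"
proof -
  have d: "((\<lambda>y. wedge (F y) (G y)) has_derivative (\<lambda>h. wedge (F x) (FD G x h) + wedge (FD F x h) (G x))) (at x)"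
    by (rule has_derivative_wedge) (use assms FD_works in auto)
  then show "(\<lambda>y. wedge (F y) (G y)) differentiable (at x)" by (auto simp: differentiable_def)
  show "FD (\<lambda>y. wedge (F y) (G y)) x h = wedge (F x) (FD G x h) + wedge (FD F x h) (G x)"
    using FD_eq[OF d] by simp
qed

lemma diff_vm:
  assumes "a differentiable (at x)"
  shows "(\<lambda>y. vm (a y)) differentiable (at x)" and "FD (\<lambda>y. vm (a y)) x h = vm (FD a x h)"
proof -
  have d: "((\<lambda>y. vm (a y)) has_derivative (\<lambda>h. vm (FD a x h))) (at x)"
    by (rule has_derivative_vm) (use assms FD_works in auto)
  then show "(\<lambda>y. vm (a y)) differentiable (at x)" by (auto simp: differentiable_def)
  show "FD (\<lambda>y. vm (a y)) x h = vm (FD a x h)" using FD_eq[OF d] by simp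
qed

lemma FD_const: "FD (\<lambda>y. c) x = (\<lambda>h. 0)"
  by (rule FD_eq) simp

lemma mv_div_eq:
  assumes "H differentiable (at x)"
  shows "mv_div H x = (\<Sum>j\<in>UNIV. mv_interior (FD H x (axis j 1)) (dx j))"
proof -
  have "(\<chi> I. partial (\<lambda>y. H y $ I) j x) = FD H x (axis j 1)" for j
  proof (rule vec_eqI')
    fix I
    have "((\<lambda>y. H y $ I) has_derivative (\<lambda>h. FD H x h $ I)) (at x)"
      by (rule bounded_linear.has_derivative[OF bounded_linear_vec_nth]) (use assms FD_works in auto)
    then show "(\<chi> I. partial (\<lambda>y. H y $ I) j x) $ I = FD H x (axis j 1) $ I"
      using FD_eq unfolding partial_def by fastforce
  qed
  then show ?thesis unfolding mv_div_def by simp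
qed

lemma mv_div_const: "mv_div (\<lambda>y. c) x = 0"
  by (subst mv_div_eq) (simp_all add: FD_const)

lemma axis_expansion: "(\<Sum>j\<in>UNIV. x $ j *\<^sub>R axis j 1) = (x :: real ^ ('n::finite))"
  using basis_expansion[of x] by (simp add: scalar_mult_eq_scaleR)

lemma linear_expansion:
  assumes "linear L" shows "(\<Sum>j\<in>UNIV. x $ j *\<^sub>R L (axis j 1)) = L x"
proof -
  have "L x = L (\<Sum>j\<in>UNIV. x $ j *\<^sub>R axis j 1)" by (simp add: axis_expansion)
  also have "\<dots> = (\<Sum>j\<in>UNIV. x $ j *\<^sub>R L (axis j 1))" using assms by (simp add: linear_sum linear_scale)
  finally show ?thesis by simp
qed

definition divv :: "(real ^ ('n::{finite,linorder}) \<Rightarrow> real ^ ('n::{finite,linorder})) \<Rightarrow> real ^ ('n::{finite,linorder}) \<Rightarrow> real" where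
  "divv a x = (\<Sum>j\<in>UNIV. FD a x (axis j 1) $ j)"

definition Tm :: "(real ^ ('n::{finite,linorder}) \<Rightarrow> real ^ ('n::{finite,linorder})) \<Rightarrow> (real ^ ('n::{finite,linorder}) \<Rightarrow> ('n::{finite,linorder}) mvec) \<Rightarrow> real ^ ('n::{finite,linorder}) \<Rightarrow> ('n::{finite,linorder}) mvec" where
  "Tm a H x = FD H x (a x) - (\<Sum>j\<in>UNIV. wedge (vm (FD a x (axis j 1))) (mv_interior (H x) (dx j)))"

lemma dx_vm: "dx j = vm (axis j 1)" by (simp add: dx_def)

lemma mv_div_wedge:
  assumes a: "a differentiable (at x)" and H: "H differentiable (at x)"
  shows "mv_div (\<lambda>y. wedge (vm (a y)) (H y)) x = divv a x *\<^sub>R H x + Tm a H x - wedge (vm (a x)) (mv_div H x)"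
proof -
  have dv: "(\<lambda>y. vm (a y)) differentiable (at x)" using diff_vm(1)[OF a] .
  have P: "(\<lambda>y. wedge (vm (a y)) (H y)) differentiable (at x)" using diff_wedge(1)[OF dv H] .
  have FP: "FD (\<lambda>y. wedge (vm (a y)) (H y)) x h = wedge (vm (a x)) (FD H x h) + wedge (vm (FD a x h)) (H x)" for h
    using diff_wedge(2)[OF dv H] diff_vm(2)[OF a] by simp
  have "mv_div (\<lambda>y. wedge (vm (a y)) (H y)) x =
     (\<Sum>j\<in>UNIV. (a x $ j) *\<^sub>R FD H x (axis j 1) - wedge (vm (a x)) (mv_interior (FD H x (axis j 1)) (dx j))
          + ((FD a x (axis j 1) $ j) *\<^sub>R H x - wedge (vm (FD a x (axis j 1))) (mv_interior (H x) (dx j))))"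
    unfolding mv_div_eq[OF P] FP
    by (simp add: interior_add interior_wedge_vm dx_vm inner_axis)
  also have "\<dots> = (\<Sum>j\<in>UNIV. (a x $ j) *\<^sub>R FD H x (axis j 1)) - wedge (vm (a x)) (\<Sum>j\<in>UNIV. mv_interior (FD H x (axis j 1)) (dx j))
       + (\<Sum>j\<in>UNIV. FD a x (axis j 1) $ j) *\<^sub>R H x - (\<Sum>j\<in>UNIV. wedge (vm (FD a x (axis j 1))) (mv_interior (H x) (dx j)))"
    by (simp add: sum.distrib sum_subtractf wedge_sum_right scaleR_sum_left)
  also have "(\<Sum>j\<in>UNIV. (a x $ j) *\<^sub>R FD H x (axis j 1)) = FD H x (a x)"
    by (rule linear_expansion[OF FD_linear[OF H]])
  finally show ?thesis unfolding Tm_def divv_def mv_div_eq[OF H, symmetric] by (simp add: algebra_simps)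
qed

lemma Tm_wedge:
  assumes a: "a differentiable (at x)" and b: "b differentiable (at x)" and K: "K differentiable (at x)"
  shows "Tm a (\<lambda>y. wedge (vm (b y)) (K y)) x = wedge (vm (- lie_bracket a b x)) (K x) + wedge (vm (b x)) (Tm a K x)"
proof -
  have dv: "(\<lambda>y. vm (b y)) differentiable (at x)" using diff_vm(1)[OF b] .
  have FH: "FD (\<lambda>y. wedge (vm (b y)) (K y)) x h = wedge (vm (b x)) (FD K x h) + wedge (vm (FD b x h)) (K x)" for h
    using diff_wedge(2)[OF dv K] diff_vm(2)[OF b] by simp
  let ?Y = "\<lambda>j. mv_interior (K x) (dx j)"
  let ?A = "\<lambda>j. FD a x (axis j 1)"
  have "(\<Sum>j\<in>UNIV. wedge (vm (?A j)) (mv_interior (wedge (vm (b x)) (K x)) (dx j)))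
      = (\<Sum>j\<in>UNIV. (b x $ j) *\<^sub>R wedge (vm (?A j)) (K x)) + wedge (vm (b x)) (\<Sum>j\<in>UNIV. wedge (vm (?A j)) (?Y j))"
    by (simp add: interior_wedge_vm dx_vm inner_axis wedge_minus_right wedge_scale_right wedge_vm_swap[of _ "b x"]
        sum_subtractf wedge_sum_right sum.distrib)
  also have "(\<Sum>j\<in>UNIV. (b x $ j) *\<^sub>R wedge (vm (?A j)) (K x)) = wedge (vm (FD a x (b x))) (K x)"
  proof -
    have "linear (\<lambda>h. wedge (vm (FD a x h)) (K x))"
      using linear_compose[OF FD_linear[OF a] linear_wedge_vm_left[of "K x"]] by (simp add: o_def)
    from linear_expansion[OF this] show ?thesis .
  qed
  finally have e: "(\<Sum>j\<in>UNIV. wedge (vm (?A j)) (mv_interior (wedge (vm (b x)) (K x)) (dx j)))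
      = wedge (vm (FD a x (b x))) (K x) + wedge (vm (b x)) (\<Sum>j\<in>UNIV. wedge (vm (?A j)) (?Y j))" .
  have "vm (- lie_bracket a b x) = vm (FD b x (a x)) - vm (FD a x (b x))"
    unfolding lie_bracket_def using linear_diff[OF linear_vm] linear_neg[OF linear_vm] by simp
  then have "wedge (vm (FD b x (a x))) (K x) = wedge (vm (- lie_bracket a b x)) (K x) + wedge (vm (FD a x (b x))) (K x)"
    by (simp add: wedge_add_left[symmetric])
  then show ?thesis
    unfolding Tm_def FH e by (simp add: wedge_minus_right wedge_minus_left algebra_simps)
qed

lemma Tm_one: "Tm a (\<lambda>y. mv_one) x = 0"
  by (simp add: Tm_def FD_const interior_one dx_vm)



lemma aw_fun_Cons: "(\<lambda>y. aw (\<lambda>i. v i y) (i # xs)) = (\<lambda>y. wedge (vm (v i y)) (aw (\<lambda>i. v i y) xs))"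
  by simp

lemma AW_diff: "\<forall>i\<in>set xs. v i differentiable (at x) \<Longrightarrow> (\<lambda>y. aw (\<lambda>i. v i y) xs) differentiable (at x)"
proof (induction xs)
  case Nil then show ?case by simp
next
  case (Cons i xs)
  then show ?case unfolding aw_fun_Cons by (intro diff_wedge(1) diff_vm(1)) auto
qed

lemma Tm_AW:
  assumes "a differentiable (at x)" "\<forall>i\<in>set xs. v i differentiable (at x)"
  shows "Tm a (\<lambda>y. aw (\<lambda>i. v i y) xs) x = om' (\<lambda>i. - lie_bracket a (v i) x) (\<lambda>i. v i x) xs"
  using assms(2)
proof (induction xs)
  case Nil then show ?case by (simp add: Tm_one)
next
  case (Cons i xs)
  then show ?case unfolding aw_fun_Cons
    by (subst Tm_wedge) (use assms(1) AW_diff in auto)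
qed

definition uu :: "(nat \<Rightarrow> real ^ ('n::{finite,linorder}) \<Rightarrow> real ^ ('n::{finite,linorder})) \<Rightarrow> real ^ ('n::{finite,linorder}) \<Rightarrow> nat list \<Rightarrow> ('n::{finite,linorder}) mvec" where
  "uu v x xs = mv_div (\<lambda>y. aw (\<lambda>i. v i y) xs) x"

lemma uu_Nil: "uu v x [] = 0"
  by (simp add: uu_def mv_div_const)

lemma uu_Cons:
  assumes "\<forall>i\<in>set (i # xs). v i differentiable (at x)"
  shows "uu v x (i # xs) = divv (v i) x *\<^sub>R aw (\<lambda>i. v i x) xs + om' (\<lambda>j. - lie_bracket (v i) (v j) x) (\<lambda>i. v i x) xs
     - wedge (vm (v i x)) (uu v x xs)"
  unfolding uu_def aw_fun_Cons
  using assms by (subst mv_div_wedge) (auto intro: AW_diff simp: Tm_AW)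

lemma homog_om': "homog (length xs) (om' F g xs)"
  by (induction xs) (simp_all add: homog_zero homog_add homog_wedge_vm homog_aw)

lemma homog_uu:
  assumes "\<forall>i\<in>set xs. v i differentiable (at x)"
  shows "homog (length xs - 1) (uu v x xs)"
  using assms
proof (induction xs)
  case Nil then show ?case by (simp add: uu_Nil homog_zero)
next
  case (Cons i xs)
  have h1: "homog (length xs) (divv (v i) x *\<^sub>R aw (\<lambda>i. v i x) xs + om' (\<lambda>j. - lie_bracket (v i) (v j) x) (\<lambda>i. v i x) xs)"
    by (intro homog_add homog_scale homog_aw homog_om')
  have h2: "homog (length xs) (wedge (vm (v i x)) (uu v x xs))"
  proof (cases xs)
    case Nil then show ?thesis by (simp add: uu_Nil homog_zero)
  next
    case (Cons j ys)
    then have "homog (Suc (length xs - 1)) (wedge (vm (v i x)) (uu v x xs))"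
      using Cons.IH Cons.prems by (intro homog_wedge_vm) auto
    then show ?thesis using \<open>xs = j # ys\<close> by simp
  qed
  show ?case using Cons.prems by (simp add: uu_Cons homog_diff[OF h1 h2])
qed

lemma Lambda_mono: "Z \<subseteq> Z' \<Longrightarrow> Lambda h Z \<subseteq> Lambda h Z'"
  unfolding Lambda_def by (rule span_mono) blast

lemma uu_Lambda:
  assumes "\<forall>i\<in>set xs. v i differentiable (at x)" "subspace Z"
    "\<forall>i\<in>set xs. v i x \<in> Z" "\<forall>i\<in>set xs. \<forall>j\<in>set xs. lie_bracket (v i) (v j) x \<in> Z"
  shows "uu v x xs \<in> Lambda (length xs - 1) Z"
  using assms(1,3,4)
proof (induction xs)
  case Nil then show ?case by (simp add: uu_Nil subspace_0[OF Lambda_subspace])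
next
  case (Cons i xs)
  have sub: "subspace (Lambda (length xs) Z)" by (rule Lambda_subspace)
  have t1: "divv (v i) x *\<^sub>R aw (\<lambda>i. v i x) xs \<in> Lambda (length xs) Z"
    using Cons.prems by (intro subspace_scale[OF sub] aw_Lambda) auto
  have t2: "om' (\<lambda>j. - lie_bracket (v i) (v j) x) (\<lambda>i. v i x) xs \<in> Lambda (length xs) Z"
    using Cons.prems subspace_neg[OF assms(2)] by (intro om'_Lambda) auto
  have t3: "wedge (vm (v i x)) (uu v x xs) \<in> Lambda (length xs) Z"
  proof (cases xs)
    case Nil then show ?thesis by (simp add: uu_Nil subspace_0[OF Lambda_subspace])
  next
    case (Cons j ys)
    then have "wedge (vm (v i x)) (uu v x xs) \<in> Lambda (Suc (length xs - 1)) Z"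
      using Cons.IH Cons.prems by (intro wedge_Lambda) auto
    then show ?thesis using \<open>xs = j # ys\<close> by simp
  qed
  show ?case using Cons.prems t1 t2 t3
    by (simp add: uu_Cons subspace_add[OF sub] subspace_diff[OF sub])
qed

lemma uu_interior_Cons:
  assumes "\<forall>i\<in>set (i # xs). v i differentiable (at x)" "\<forall>j\<in>set (i # xs). v j x \<bullet> \<gamma> = 0"
  shows "mv_interior (uu v x (i # xs)) (vm \<gamma>) =
     om (\<lambda>j. - lie_bracket (v i) (v j) x \<bullet> \<gamma>) (\<lambda>i. v i x) xs + wedge (vm (v i x)) (mv_interior (uu v x xs) (vm \<gamma>))"
proof -
  have z: "\<forall>j\<in>set xs. v j x \<bullet> \<gamma> = 0" using assms(2) by auto
  have "mv_interior (uu v x (i # xs)) (vm \<gamma>) = om (\<lambda>j. - lie_bracket (v i) (v j) x \<bullet> \<gamma>) (\<lambda>i. v i x) xs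
      - ((v i x \<bullet> \<gamma>) *\<^sub>R uu v x xs - wedge (vm (v i x)) (mv_interior (uu v x xs) (vm \<gamma>)))"
    unfolding uu_Cons[OF assms(1)]
    by (simp add: interior_add interior_minus interior_scale aw_interior_zero[OF z] om'_interior[OF z]
        interior_wedge_vm)
  then show ?thesis using assms(2) by simp
qed

lemma uu_Q:
  assumes "\<forall>i\<in>set xs. v i differentiable (at x)" "\<forall>j\<in>set xs. v j x \<bullet> \<gamma> = 0"
    "\<forall>j\<in>set xs. v j x \<bullet> \<theta> = 0"
  shows "mv_interior (mv_interior (uu v x xs) (vm \<gamma>)) (vm \<theta>) = 0"
  using assms
proof (induction xs)
  case Nil then show ?case by (simp add: uu_Nil)
next
  case (Cons i xs)
  have zt: "\<forall>y\<in>(\<lambda>i. v i x) ` set xs. y \<bullet> \<theta> = 0" using Cons.prems(3) by auto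
  have o: "mv_interior (om (\<lambda>j. - lie_bracket (v i) (v j) x \<bullet> \<gamma>) (\<lambda>i. v i x) xs) (vm \<theta>) = 0"
    by (rule Lambda_interior_zero[OF zt om_Lambda]) simp
  have ih: "mv_interior (mv_interior (uu v x xs) (vm \<gamma>)) (vm \<theta>) = 0"
    using Cons.IH Cons.prems by auto
  show ?case unfolding uu_interior_Cons[OF Cons.prems(1,2)]
    using o ih Cons.prems(3) by (simp add: interior_add interior_wedge_vm)
qed

lemma lie_bracket_self: "lie_bracket w w x = 0"
  by (simp add: lie_bracket_def)

lemma lie_bracket_anti: "lie_bracket w w' x = - lie_bracket w' w x"
  by (simp add: lie_bracket_def)

lemma uu_P2:
  assumes "\<forall>i\<in>set xs. v i differentiable (at x)" "\<forall>j\<in>set xs. v j x \<bullet> \<gamma> = 0"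
    "distinct xs" "dual_on (\<lambda>i. v i x) (set xs)" "mv_interior (uu v x xs) (vm \<gamma>) = 0"
  shows "\<forall>p\<in>set xs. \<forall>q\<in>set xs. lie_bracket (v p) (v q) x \<bullet> \<gamma> = 0"
  using assms
proof (induction xs)
  case Nil then show ?case by simp
next
  case (Cons i xs)
  obtain \<theta> where th: "v i x \<bullet> \<theta> = 1" "\<forall>q\<in>set (i # xs). q \<noteq> i \<longrightarrow> v q x \<bullet> \<theta> = 0"
    using Cons.prems(4) unfolding dual_on_def by force
  have zt: "\<forall>j\<in>set xs. v j x \<bullet> \<theta> = 0" using th(2) Cons.prems(3) by auto
  have zt': "\<forall>y\<in>(\<lambda>i. v i x) ` set xs. y \<bullet> \<theta> = 0" using zt by auto
  let ?W = "mv_interior (uu v x xs) (vm \<gamma>)"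
  let ?O = "om (\<lambda>j. - lie_bracket (v i) (v j) x \<bullet> \<gamma>) (\<lambda>i. v i x) xs"
  have e: "?O + wedge (vm (v i x)) ?W = 0"
    using uu_interior_Cons[OF Cons.prems(1,2)] Cons.prems(5) by simp
  have o: "mv_interior ?O (vm \<theta>) = 0"
    by (rule Lambda_interior_zero[OF zt' om_Lambda]) simp
  have q: "mv_interior ?W (vm \<theta>) = 0" using uu_Q[of xs v x \<gamma> \<theta>] Cons.prems zt by auto
  have "mv_interior (?O + wedge (vm (v i x)) ?W) (vm \<theta>) = ?W"
    using o q th(1) by (simp add: interior_add interior_wedge_vm)
  then have W0: "?W = 0" using e by simp
  then have O0: "?O = 0" using e by simp
  have dxs: "dual_on (\<lambda>i. v i x) (set xs)" using Cons.prems(4) dual_on_mono by (metis set_subset_Cons)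
  have ih: "\<forall>p\<in>set xs. \<forall>q\<in>set xs. lie_bracket (v p) (v q) x \<bullet> \<gamma> = 0"
    using Cons.IH Cons.prems dxs W0 by auto
  have c: "\<forall>j\<in>set xs. - lie_bracket (v i) (v j) x \<bullet> \<gamma> = 0"
    using om_indep[OF _ dxs O0] Cons.prems(3) by auto
  show ?case
  proof (intro ballI)
    fix p q assume p: "p \<in> set (i # xs)" and q: "q \<in> set (i # xs)"
    show "lie_bracket (v p) (v q) x \<bullet> \<gamma> = 0"
    proof (cases "p = i")
      case True
      then show ?thesis
      proof (cases "q = i")
        case True then show ?thesis using \<open>p = i\<close> by (simp add: lie_bracket_self)
      next
        case False then show ?thesis using \<open>p = i\<close> q c by auto
      qed
    next
      case False
      then have pxs: "p \<in> set xs" using p by simp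
      show ?thesis
      proof (cases "q = i")
        case True then show ?thesis using pxs c lie_bracket_anti[of "v p" "v i" x] by auto
      next
        case False then show ?thesis using pxs q ih by auto
      qed
    qed
  qed
qed

lemma div_pair:
  fixes i j :: nat
  assumes "v i differentiable (at x)" "v j differentiable (at x)"
  shows "mv_div (\<lambda>y. wedge (vm (v i y)) (vm (v j y))) x =
     vm (divv (v i) x *\<^sub>R v j x - divv (v j) x *\<^sub>R v i x - lie_bracket (v i) (v j) x)"
proof -
  have f: "(\<lambda>y. wedge (vm (v i y)) (vm (v j y))) = (\<lambda>y. aw (\<lambda>i. v i y) [i, j])"
    by (simp add: wedge_vm_one)
  have "uu v x [j] = divv (v j) x *\<^sub>R mv_one"
    using assms by (simp add: uu_Cons uu_Nil)
  then have "uu v x [i, j] = divv (v i) x *\<^sub>R vm (v j x) + vm (- lie_bracket (v i) (v j) x) - divv (v j) x *\<^sub>R vm (v i x)"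
    using assms by (simp add: uu_Cons wedge_vm_one wedge_scale_right)
  also have "\<dots> = vm (divv (v i) x *\<^sub>R v j x - divv (v j) x *\<^sub>R v i x - lie_bracket (v i) (v j) x)"
    by (simp add: linear_diff[OF linear_vm] linear_scale[OF linear_vm] linear_neg[OF linear_vm])
  finally show ?thesis unfolding f uu_def .
qed



lemma lower_bound:
  fixes M :: "nat \<Rightarrow> nat \<Rightarrow> real"
  assumes fin: "finite S" and M: "\<forall>l\<in>S. \<forall>i\<in>S. \<bar>M l i - (if l = i then 1 else 0)\<bar> \<le> \<epsilon>"
    and eps: "\<epsilon> * card S \<le> 1/2"
  shows "(\<Sum>i\<in>S. \<bar>c i\<bar>) \<le> 2 * (\<Sum>l\<in>S. \<bar>\<Sum>i\<in>S. c i * M l i\<bar>)"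
proof -
  have e0: "\<epsilon> \<ge> 0" if "S \<noteq> {}" using M that by (meson abs_ge_zero all_not_in_conv order_trans)
  have per: "\<bar>c l\<bar> \<le> \<bar>\<Sum>i\<in>S. c i * M l i\<bar> + \<epsilon> * (\<Sum>i\<in>S. \<bar>c i\<bar>)" if l: "l \<in> S" for l
  proof -
    have "(\<Sum>i\<in>S. c i * (if l = i then 1 else 0)) = c l" using l fin by (simp add: if_distrib sum.delta cong: if_cong)
    then have "(\<Sum>i\<in>S. c i * M l i) = c l + (\<Sum>i\<in>S. c i * (M l i - (if l = i then 1 else 0)))"
      by (simp add: algebra_simps sum.distrib sum_subtractf)
    moreover have "\<bar>\<Sum>i\<in>S. c i * (M l i - (if l = i then 1 else 0))\<bar> \<le> (\<Sum>i\<in>S. \<bar>c i\<bar> * \<epsilon>)"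
    proof -
      have "\<bar>\<Sum>i\<in>S. c i * (M l i - (if l = i then 1 else 0))\<bar> \<le> (\<Sum>i\<in>S. \<bar>c i * (M l i - (if l = i then 1 else 0))\<bar>)"
        by (rule sum_abs)
      also have "\<dots> \<le> (\<Sum>i\<in>S. \<bar>c i\<bar> * \<epsilon>)"
      proof (rule sum_mono)
        fix i assume "i \<in> S"
        then have "\<bar>M l i - (if l = i then 1 else 0)\<bar> \<le> \<epsilon>" using M l by blast
        then show "\<bar>c i * (M l i - (if l = i then 1 else 0))\<bar> \<le> \<bar>c i\<bar> * \<epsilon>"
          by (simp add: abs_mult mult_left_mono)
      qed
      finally show ?thesis .
    qed
    moreover have "(\<Sum>i\<in>S. \<bar>c i\<bar> * \<epsilon>) = \<epsilon> * (\<Sum>i\<in>S. \<bar>c i\<bar>)" by (simp add: sum_distrib_left mult.commute)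
    ultimately show ?thesis
      using abs_triangle_ineq4[of "\<Sum>i\<in>S. c i * M l i" "\<Sum>i\<in>S. c i * (M l i - (if l = i then 1 else 0))"]
      by simp
  qed
  have "(\<Sum>l\<in>S. \<bar>c l\<bar>) \<le> (\<Sum>l\<in>S. \<bar>\<Sum>i\<in>S. c i * M l i\<bar> + \<epsilon> * (\<Sum>i\<in>S. \<bar>c i\<bar>))"
    by (rule sum_mono) (rule per)
  also have "\<dots> = (\<Sum>l\<in>S. \<bar>\<Sum>i\<in>S. c i * M l i\<bar>) + (\<epsilon> * card S) * (\<Sum>i\<in>S. \<bar>c i\<bar>)"
    by (simp add: sum.distrib)
  also have "(\<epsilon> * card S) * (\<Sum>i\<in>S. \<bar>c i\<bar>) \<le> 1/2 * (\<Sum>i\<in>S. \<bar>c i\<bar>)"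
    by (rule mult_right_mono[OF eps]) (simp add: sum_nonneg)
  finally show ?thesis by simp
qed

lemma coeff_cont:
  fixes v :: "nat \<Rightarrow> real ^ ('n::{finite,linorder}) \<Rightarrow> real ^ ('n::{finite,linorder})"
    and w :: "real ^ ('n::{finite,linorder}) \<Rightarrow> real ^ ('n::{finite,linorder})"
    and f :: "real ^ ('n::{finite,linorder}) \<Rightarrow> nat \<Rightarrow> real"
  assumes "open \<Omega>" "x \<in> \<Omega>" "finite S" "\<forall>i\<in>S. isCont (v i) x" "dual_on (\<lambda>i. v i x) S" "isCont w x"
    and rep: "\<forall>y\<in>\<Omega>. w y = (\<Sum>i\<in>S. f y i *\<^sub>R v i y)"
  shows "\<forall>i\<in>S. ((\<lambda>y. f y i) \<longlongrightarrow> f x i) (at x)"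
proof -
  have "\<forall>l\<in>S. \<exists>b. v l x \<bullet> b = 1 \<and> (\<forall>q\<in>S. q \<noteq> l \<longrightarrow> v q x \<bullet> b = 0)"
    using assms(5) unfolding dual_on_def by blast
  then obtain \<beta> where \<beta>: "\<forall>l\<in>S. v l x \<bullet> \<beta> l = 1 \<and> (\<forall>q\<in>S. q \<noteq> l \<longrightarrow> v q x \<bullet> \<beta> l = 0)"
    by metis
  define \<epsilon> :: real where "\<epsilon> = 1 / (2 * (card S + 1))"
  have epos: "\<epsilon> > 0" unfolding \<epsilon>_def by simp
  have eps: "\<epsilon> * card S \<le> 1/2" unfolding \<epsilon>_def by (simp add: field_simps)
  have ev1: "eventually (\<lambda>y. \<forall>l\<in>S. \<forall>i\<in>S. \<bar>\<beta> l \<bullet> v i y - (if l = i then 1 else 0)\<bar> \<le> \<epsilon>) (at x)"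
  proof (intro eventually_ball_finite ballI assms(3))
    fix l i assume l: "l \<in> S" and i: "i \<in> S"
    have "((\<lambda>y. \<beta> l \<bullet> v i y) \<longlongrightarrow> \<beta> l \<bullet> v i x) (at x)"
      using assms(4) i unfolding isCont_def by (intro tendsto_intros) auto
    moreover have "\<beta> l \<bullet> v i x = (if l = i then 1 else 0)" using \<beta> l i by (auto simp: inner_commute)
    ultimately have "((\<lambda>y. \<beta> l \<bullet> v i y) \<longlongrightarrow> (if l = i then 1 else 0)) (at x)" by simp
    then have "eventually (\<lambda>y. dist (\<beta> l \<bullet> v i y) (if l = i then 1 else 0) < \<epsilon>) (at x)"
      using epos tendstoD by blast
    then show "eventually (\<lambda>y. \<bar>\<beta> l \<bullet> v i y - (if l = i then 1 else 0)\<bar> \<le> \<epsilon>) (at x)"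
      by eventually_elim (simp add: dist_real_def)
  qed
  have ev2: "eventually (\<lambda>y. y \<in> \<Omega>) (at x)" using eventually_at_in_open'[OF assms(1,2)] .
  define r where "r y = w y - (\<Sum>i\<in>S. f x i *\<^sub>R v i y)" for y
  have rx: "r x = 0" using rep assms(2) unfolding r_def by simp
  have rt: "(r \<longlongrightarrow> 0) (at x)"
  proof -
    have "(r \<longlongrightarrow> r x) (at x)" unfolding r_def
      using assms(4,6) unfolding isCont_def by (intro tendsto_intros) auto
    then show ?thesis using rx by simp
  qed
  define G where "G y = 2 * (\<Sum>l\<in>S. \<bar>\<beta> l \<bullet> r y\<bar>)" for y
  have Gt: "(G \<longlongrightarrow> 0) (at x)"
  proof -
    have "(G \<longlongrightarrow> 2 * (\<Sum>l\<in>S. \<bar>\<beta> l \<bullet> 0\<bar>)) (at x)" unfolding G_def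
      using rt by (intro tendsto_intros)
    then show ?thesis by simp
  qed
  have bound: "eventually (\<lambda>y. (\<Sum>i\<in>S. \<bar>f y i - f x i\<bar>) \<le> G y) (at x)"
    using ev1 ev2
  proof eventually_elim
    case (elim y)
    have "\<beta> l \<bullet> r y = (\<Sum>i\<in>S. (f y i - f x i) * (\<beta> l \<bullet> v i y))" for l
    proof -
      have "r y = (\<Sum>i\<in>S. (f y i - f x i) *\<^sub>R v i y)"
        unfolding r_def using rep elim(2) by (simp add: scaleR_diff_left sum_subtractf)
      then show ?thesis by (simp add: inner_sum_right)
    qed
    then show ?case unfolding G_def
      using lower_bound[OF assms(3) _ eps, of "\<lambda>l i. \<beta> l \<bullet> v i y" "\<lambda>i. f y i - f x i"] elim(1) by simp
  qed
  show ?thesis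
  proof
    fix i assume i: "i \<in> S"
    have "((\<lambda>y. f y i - f x i) \<longlongrightarrow> 0) (at x)"
    proof (rule Lim_null_comparison[OF _ Gt])
      show "eventually (\<lambda>y. norm (f y i - f x i) \<le> G y) (at x)"
        using bound
      proof eventually_elim
        case (elim y)
        have "\<bar>f y i - f x i\<bar> \<le> (\<Sum>i\<in>S. \<bar>f y i - f x i\<bar>)"
          by (rule member_le_sum[OF i]) (simp_all add: assms(3))
        then show ?case using elim by simp
      qed
    qed
    then show "((\<lambda>y. f y i) \<longlongrightarrow> f x i) (at x)" by (simp add: LIM_zero_iff)
  qed
qed

lemma zero_deriv_prod:
  fixes \<alpha> \<psi> :: "'a::real_normed_vector \<Rightarrow> real"
  assumes a: "(\<alpha> \<longlongrightarrow> 0) (at x)" and d: "(\<psi> has_derivative D) (at x)" and z: "\<psi> x = 0"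
  shows "((\<lambda>y. \<alpha> y * \<psi> y) has_derivative (\<lambda>h. 0)) (at x)"
proof -
  have bl: "bounded_linear D" using d by (rule has_derivative_bounded_linear)
  obtain K where K: "K > 0" "\<And>h. norm (D h) \<le> norm h * K"
    using bounded_linear.pos_bounded[OF bl] by blast
  have rest: "((\<lambda>y. norm ((\<psi> y - \<psi> x) - D (y - x)) / norm (y - x)) \<longlongrightarrow> 0) (at x)"
    using d unfolding has_derivative_iff_norm by blast
  define g where "g y = \<bar>\<alpha> y\<bar> * (norm ((\<psi> y - \<psi> x) - D (y - x)) / norm (y - x) + K)" for y
  have gt: "(g \<longlongrightarrow> 0) (at x)"
  proof -
    have "(g \<longlongrightarrow> \<bar>0\<bar> * (0 + K)) (at x)" unfolding g_def
      using a rest by (intro tendsto_intros)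
    then show ?thesis by simp
  qed
  have ev: "eventually (\<lambda>y. norm (norm ((\<alpha> y * \<psi> y - \<alpha> x * \<psi> x) - 0) / norm (y - x)) \<le> g y) (at x)"
  proof (rule eventually_mono[OF eventually_True])
    fix y
    have n: "norm (\<psi> y) \<le> norm ((\<psi> y - \<psi> x) - D (y - x)) + norm (y - x) * K"
      using norm_triangle_ineq[of "(\<psi> y - \<psi> x) - D (y - x)" "D (y - x)"] K(2)[of "y - x"] z by simp
    show "norm (norm ((\<alpha> y * \<psi> y - \<alpha> x * \<psi> x) - 0) / norm (y - x)) \<le> g y"
    proof (cases "y = x")
      case True then show ?thesis unfolding g_def using K by simp
    next
      case False
      then have np: "norm (y - x) > 0" by simp
      have "norm (norm ((\<alpha> y * \<psi> y - \<alpha> x * \<psi> x) - 0) / norm (y - x)) = \<bar>\<alpha> y\<bar> * (norm (\<psi> y) / norm (y - x))"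
        using z by (simp add: abs_mult)
      also have "\<dots> \<le> \<bar>\<alpha> y\<bar> * ((norm ((\<psi> y - \<psi> x) - D (y - x)) + norm (y - x) * K) / norm (y - x))"
        by (intro mult_left_mono divide_right_mono n) simp_all
      also have "\<dots> = g y" unfolding g_def using np by (simp add: add_divide_distrib)
      finally show ?thesis .
    qed
  qed
  have "((\<lambda>y. norm ((\<alpha> y * \<psi> y - \<alpha> x * \<psi> x) - 0) / norm (y - x)) \<longlongrightarrow> 0) (at x)"
    by (rule Lim_null_comparison[OF ev gt])
  then show ?thesis unfolding has_derivative_iff_norm by simp
qed



lemma deriv_coeff:
  fixes v :: "nat \<Rightarrow> real ^ ('n::{finite,linorder}) \<Rightarrow> real ^ ('n::{finite,linorder})"
    and w :: "real ^ ('n::{finite,linorder}) \<Rightarrow> real ^ ('n::{finite,linorder})"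
    and f :: "real ^ ('n::{finite,linorder}) \<Rightarrow> nat \<Rightarrow> real"
  assumes op: "open \<Omega>" and x: "x \<in> \<Omega>" and fin: "finite S"
    and dv: "\<forall>i\<in>S. (v i has_derivative Dv i) (at x)" and dw: "(w has_derivative Dw) (at x)"
    and rep: "\<forall>y\<in>\<Omega>. w y = (\<Sum>i\<in>S. f y i *\<^sub>R v i y)"
    and ct: "\<forall>i\<in>S. ((\<lambda>y. f y i) \<longlongrightarrow> f x i) (at x)"
    and orth: "\<forall>i\<in>S. v i x \<bullet> \<gamma> = 0"
  shows "\<gamma> \<bullet> Dw h = (\<Sum>i\<in>S. f x i * (\<gamma> \<bullet> Dv i h))"
proof -
  define \<phi> where "\<phi> y = \<gamma> \<bullet> w y - (\<Sum>i\<in>S. f x i * (\<gamma> \<bullet> v i y))" for y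
  have d1: "(\<phi> has_derivative (\<lambda>h. \<gamma> \<bullet> Dw h - (\<Sum>i\<in>S. f x i * (\<gamma> \<bullet> Dv i h)))) (at x)"
    unfolding \<phi>_def
  proof (intro has_derivative_diff has_derivative_sum ballI)
    show "((\<lambda>y. \<gamma> \<bullet> w y) has_derivative (\<lambda>h. \<gamma> \<bullet> Dw h)) (at x)"
      by (rule bounded_linear.has_derivative[OF bounded_linear_inner_right dw])
    fix i assume i: "i \<in> S"
    have "((\<lambda>y. \<gamma> \<bullet> v i y) has_derivative (\<lambda>h. \<gamma> \<bullet> Dv i h)) (at x)"
      by (rule bounded_linear.has_derivative[OF bounded_linear_inner_right]) (use dv i in auto)
    then show "((\<lambda>y. f x i * (\<gamma> \<bullet> v i y)) has_derivative (\<lambda>h. f x i * (\<gamma> \<bullet> Dv i h))) (at x)"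
      by (rule bounded_linear.has_derivative[OF bounded_linear_mult_right])
  qed
  have d2: "((\<lambda>y. \<Sum>i\<in>S. (f y i - f x i) * (\<gamma> \<bullet> (v i y - v i x))) has_derivative (\<lambda>h. \<Sum>i\<in>S. 0)) (at x)"
  proof (intro has_derivative_sum ballI)
    fix i assume i: "i \<in> S"
    have a: "((\<lambda>y. f y i - f x i) \<longlongrightarrow> 0) (at x)" using ct i by (simp add: LIM_zero_iff)
    have "((\<lambda>y. \<gamma> \<bullet> (v i y - v i x)) has_derivative (\<lambda>h. \<gamma> \<bullet> Dv i h)) (at x)"
      by (rule bounded_linear.has_derivative[OF bounded_linear_inner_right])
         (use dv i in \<open>auto intro!: derivative_eq_intros\<close>)
    then show "((\<lambda>y. (f y i - f x i) * (\<gamma> \<bullet> (v i y - v i x))) has_derivative (\<lambda>h. 0)) (at x)"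
      by (rule zero_deriv_prod[OF a]) simp
  qed
  have eq: "(\<Sum>i\<in>S. (f y i - f x i) * (\<gamma> \<bullet> (v i y - v i x))) = \<phi> y" if y: "y \<in> \<Omega>" for y
  proof -
    have "(\<Sum>i\<in>S. (f y i - f x i) * (\<gamma> \<bullet> (v i y - v i x))) = (\<Sum>i\<in>S. f y i * (\<gamma> \<bullet> v i y) - f x i * (\<gamma> \<bullet> v i y))"
      using orth by (intro sum.cong refl) (simp add: inner_diff_right inner_commute algebra_simps)
    also have "\<dots> = \<gamma> \<bullet> w y - (\<Sum>i\<in>S. f x i * (\<gamma> \<bullet> v i y))"
      using rep y by (simp add: sum_subtractf inner_sum_right)
    finally show ?thesis unfolding \<phi>_def .
  qed
  have d3: "(\<phi> has_derivative (\<lambda>h. \<Sum>i\<in>S. 0)) (at x)"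
    by (rule has_derivative_transform_within_open[OF d2 op x]) (use eq in auto)
  have "(\<lambda>h. \<gamma> \<bullet> Dw h - (\<Sum>i\<in>S. f x i * (\<gamma> \<bullet> Dv i h))) = (\<lambda>h. \<Sum>i\<in>S. 0)"
    by (rule has_derivative_unique[OF d1 d3])
  then have "\<gamma> \<bullet> Dw h - (\<Sum>i\<in>S. f x i * (\<gamma> \<bullet> Dv i h)) = 0" by (metis sum.neutral_const)
  then show ?thesis by simp
qed

lemma C1_deriv: "C1_on \<Omega> w \<Longrightarrow> y \<in> \<Omega> \<Longrightarrow> (w has_derivative FD w y) (at y)"
  unfolding C1_on_def using FD_eq by fastforce

lemma invol_from_br:
  fixes \<Omega> :: "(real ^ 'n::{finite,linorder}) set"
    and v :: "nat \<Rightarrow> real ^ 'n::{finite,linorder} \<Rightarrow> real ^ 'n::{finite,linorder}"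
    and V :: "real ^ 'n::{finite,linorder} \<Rightarrow> (real ^ 'n::{finite,linorder}) set"
  assumes op: "open \<Omega>"
    and C1: "\<forall>i\<in>{1..k}. C1_on \<Omega> (v i)"
    and indep: "\<forall>y\<in>\<Omega>. \<forall>c::nat \<Rightarrow> real. (\<Sum>i=1..k. c i *\<^sub>R v i y) = 0 \<longrightarrow> (\<forall>i\<in>{1..k}. c i = 0)"
    and VV: "\<forall>y\<in>\<Omega>. V y = span ((\<lambda>i. v i y) ` {1..k})"
    and x: "x \<in> \<Omega>"
    and br: "\<forall>i\<in>{1..k}. \<forall>j\<in>{1..k}. lie_bracket (v i) (v j) x \<in> V x"
  shows "involutive_at \<Omega> V x"
  unfolding involutive_at_def
proof (intro allI impI)
  fix w w' assume H: "C1_on \<Omega> w \<and> C1_on \<Omega> w' \<and> (\<forall>y\<in>\<Omega>. w y \<in> V y \<and> w' y \<in> V y)"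
  define S where "S = {1..k::nat}"
  have fin: "finite S" unfolding S_def by simp
  have ex: "\<exists>c. u y = (\<Sum>i\<in>S. c i *\<^sub>R v i y)" if "y \<in> \<Omega>" "u y \<in> V y" for u y
    using span_image_sum[of "u y" "\<lambda>i. v i y" S] that VV fin unfolding S_def by auto
  define f where "f y = (SOME c. w y = (\<Sum>i\<in>S. c i *\<^sub>R v i y))" for y
  define f' where "f' y = (SOME c. w' y = (\<Sum>i\<in>S. c i *\<^sub>R v i y))" for y
  have rep: "\<forall>y\<in>\<Omega>. w y = (\<Sum>i\<in>S. f y i *\<^sub>R v i y)"
  proof
    fix y assume y: "y \<in> \<Omega>"
    then have "\<exists>c. w y = (\<Sum>i\<in>S. c i *\<^sub>R v i y)" using ex[of y w] H by blast
    then show "w y = (\<Sum>i\<in>S. f y i *\<^sub>R v i y)" unfolding f_def by (rule someI_ex)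
  qed
  have rep': "\<forall>y\<in>\<Omega>. w' y = (\<Sum>i\<in>S. f' y i *\<^sub>R v i y)"
  proof
    fix y assume y: "y \<in> \<Omega>"
    then have "\<exists>c. w' y = (\<Sum>i\<in>S. c i *\<^sub>R v i y)" using ex[of y w'] H by blast
    then show "w' y = (\<Sum>i\<in>S. f' y i *\<^sub>R v i y)" unfolding f'_def by (rule someI_ex)
  qed
  have dv: "\<forall>i\<in>S. (v i has_derivative FD (v i) x) (at x)" using C1 C1_deriv x unfolding S_def by blast
  have dw: "(w has_derivative FD w x) (at x)" using H C1_deriv x by blast
  have dw': "(w' has_derivative FD w' x) (at x)" using H C1_deriv x by blast
  have cv: "\<forall>i\<in>S. isCont (v i) x" using dv has_derivative_continuous by blast
  have cw: "isCont w x" using dw has_derivative_continuous by blast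
  have cw': "isCont w' x" using dw' has_derivative_continuous by blast
  have dual: "dual_on (\<lambda>i. v i x) S"
    by (rule dual_exists[OF _ fin]) (use indep x in \<open>simp add: S_def\<close>)
  have ct: "\<forall>i\<in>S. ((\<lambda>y. f y i) \<longlongrightarrow> f x i) (at x)"
    by (rule coeff_cont[OF op x fin cv dual cw rep])
  have ct': "\<forall>i\<in>S. ((\<lambda>y. f' y i) \<longlongrightarrow> f' x i) (at x)"
    by (rule coeff_cont[OF op x fin cv dual cw' rep'])
  have Vx: "V x = span ((\<lambda>i. v i x) ` S)" using VV x unfolding S_def by simp
  have subV: "subspace (V x)" unfolding Vx by (rule subspace_span)
  show "lie_bracket w w' x \<in> V x"
  proof (rule orth_complement_mem[OF subV])
    fix \<gamma> assume g: "\<forall>z\<in>V x. z \<bullet> \<gamma> = 0"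
    have orth: "\<forall>i\<in>S. v i x \<bullet> \<gamma> = 0" using g unfolding Vx by (auto intro: span_base)
    let ?D = "\<lambda>i. FD (v i) x"
    have dc: "\<gamma> \<bullet> FD w x h = (\<Sum>i\<in>S. f x i * (\<gamma> \<bullet> ?D i h))" for h
      by (rule deriv_coeff[OF op x fin dv dw rep ct orth])
    have dc': "\<gamma> \<bullet> FD w' x h = (\<Sum>i\<in>S. f' x i * (\<gamma> \<bullet> ?D i h))" for h
      by (rule deriv_coeff[OF op x fin dv dw' rep' ct' orth])
    have lin: "\<gamma> \<bullet> ?D i (\<Sum>l\<in>S. c l *\<^sub>R v l x) = (\<Sum>l\<in>S. c l * (\<gamma> \<bullet> ?D i (v l x)))" if "i \<in> S" for i c
    proof -
      have "linear (?D i)" using dv that has_derivative_linear by blast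
      then show ?thesis by (simp add: linear_sum linear_scale inner_sum_right)
    qed
    have "\<gamma> \<bullet> lie_bracket w w' x = \<gamma> \<bullet> FD w x (w' x) - \<gamma> \<bullet> FD w' x (w x)"
      by (simp add: lie_bracket_def inner_diff_right)
    also have "\<dots> = (\<Sum>i\<in>S. \<Sum>l\<in>S. f x i * f' x l * (\<gamma> \<bullet> ?D i (v l x)))
        - (\<Sum>l\<in>S. \<Sum>i\<in>S. f' x l * f x i * (\<gamma> \<bullet> ?D l (v i x)))"
      unfolding dc dc' using rep rep' x lin
      by (simp add: sum_distrib_left mult.assoc)
    also have "(\<Sum>l\<in>S. \<Sum>i\<in>S. f' x l * f x i * (\<gamma> \<bullet> ?D l (v i x))) = (\<Sum>i\<in>S. \<Sum>l\<in>S. f' x l * f x i * (\<gamma> \<bullet> ?D l (v i x)))"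
      by (rule sum.swap)
    also have "(\<Sum>i\<in>S. \<Sum>l\<in>S. f x i * f' x l * (\<gamma> \<bullet> ?D i (v l x))) - (\<Sum>i\<in>S. \<Sum>l\<in>S. f' x l * f x i * (\<gamma> \<bullet> ?D l (v i x)))
        = (\<Sum>i\<in>S. \<Sum>l\<in>S. f x i * f' x l * (\<gamma> \<bullet> lie_bracket (v i) (v l) x))"
      by (simp add: lie_bracket_def inner_diff_right sum_subtractf[symmetric] algebra_simps)
    also have "\<dots> = 0"
    proof (intro sum.neutral ballI)
      fix i l assume "i \<in> S" "l \<in> S"
      then have "lie_bracket (v i) (v l) x \<in> V x" using br unfolding S_def by blast
      then have "lie_bracket (v i) (v l) x \<bullet> \<gamma> = 0" using g by blast
      then have "\<gamma> \<bullet> lie_bracket (v i) (v l) x = 0" by (simp only: inner_commute)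
      then show "f x i * f' x l * (\<gamma> \<bullet> lie_bracket (v i) (v l) x) = 0" by simp
    qed
    finally show "lie_bracket w w' x \<bullet> \<gamma> = 0" by (simp add: inner_commute)
  qed
qed



lemma homog0_interior: "homog 0 u \<Longrightarrow> mv_interior u (vm \<theta>) = 0"
  unfolding homog_def by (intro vec_eqI') (simp add: interior_vm)

lemma aw_wedge_zero_span:
  assumes dist: "distinct xs" and n0: "0 \<notin> set xs"
    and indep: "\<forall>c. (\<Sum>i\<in>set xs. c i *\<^sub>R g i) = 0 \<longrightarrow> (\<forall>i\<in>set xs. c i = 0)"
    and z0: "wedge (aw g xs) (vm z) = 0"
  shows "z \<in> span (g ` set xs)"
proof (rule ccontr)
  assume nz: "z \<notin> span (g ` set xs)"
  define g' where "g' = g(0 := z)"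
  have agg: "aw g' xs = aw g xs" unfolding aw_def g'_def using n0
    by (intro arg_cong[where f=wedge_list] map_cong) auto
  have indep': "\<forall>c. (\<Sum>i\<in>set (0 # xs). c i *\<^sub>R g' i) = 0 \<longrightarrow> (\<forall>i\<in>set (0 # xs). c i = 0)"
  proof (intro allI impI)
    fix c assume h: "(\<Sum>i\<in>set (0 # xs). c i *\<^sub>R g' i) = 0"
    have s: "(\<Sum>i\<in>set xs. c i *\<^sub>R g' i) = (\<Sum>i\<in>set xs. c i *\<^sub>R g i)"
      using n0 unfolding g'_def by (intro sum.cong) auto
    have h2: "c 0 *\<^sub>R z + (\<Sum>i\<in>set xs. c i *\<^sub>R g i) = 0"
      using h n0 s by (simp add: g'_def)
    have c0: "c 0 = 0"
    proof (rule ccontr)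
      assume "c 0 \<noteq> 0"
      note nc = this
      have e: "c 0 *\<^sub>R z = - (\<Sum>i\<in>set xs. c i *\<^sub>R g i)"
        using h2 by (simp add: eq_neg_iff_add_eq_0)
      have "z = (1 / c 0) *\<^sub>R (c 0 *\<^sub>R z)" using nc by simp
      also have "\<dots> = (1 / c 0) *\<^sub>R (- (\<Sum>i\<in>set xs. c i *\<^sub>R g i))" using e by simp
      finally have zz: "z = (1 / c 0) *\<^sub>R (- (\<Sum>i\<in>set xs. c i *\<^sub>R g i))" .
      have "(\<Sum>i\<in>set xs. c i *\<^sub>R g i) \<in> span (g ` set xs)"
        by (intro span_sum span_scale span_base) auto
      then have "z \<in> span (g ` set xs)" unfolding zz by (intro span_scale span_neg)
      then show False using nz by simp
    qed
    then have "(\<Sum>i\<in>set xs. c i *\<^sub>R g i) = 0" using h2 by simp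
    then show "\<forall>i\<in>set (0 # xs). c i = 0" using indep c0 by simp
  qed
  have dual: "dual_on g' (set (0 # xs))" by (rule dual_exists[OF indep']) simp
  have nzw: "aw g' (0 # xs) \<noteq> 0" by (rule aw_nonzero) (use dist n0 dual in auto)
  have "wedge (vm z) (aw g xs) = 0"
    using wedge_right_comm[OF homog_aw, of g xs z] z0 by simp
  then have "aw g' (0 # xs) = 0" using agg by (simp add: g'_def)
  with nzw show False by simp
qed

theorem corollary2:
  fixes \<Omega> :: "(real ^ 'n::{finite,linorder}) set"
    and v :: "nat \<Rightarrow> real ^ 'n::{finite,linorder} \<Rightarrow> real ^ 'n::{finite,linorder}"
    and V :: "real ^ 'n::{finite,linorder} \<Rightarrow> (real ^ 'n::{finite,linorder}) set"
    and k :: nat and x :: "real ^ 'n::{finite,linorder}"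
  assumes "open \<Omega>"
    and "\<forall>i\<in>{1..k}. C1_on \<Omega> (v i)"
    and "\<forall>y\<in>\<Omega>. \<forall>c::nat \<Rightarrow> real. (\<Sum>i=1..k. c i *\<^sub>R v i y) = 0 \<longrightarrow> (\<forall>i\<in>{1..k}. c i = 0)"
    and "\<forall>y\<in>\<Omega>. V y = span ((\<lambda>i. v i y) ` {1..k})"
    and "x \<in> \<Omega>"
  shows "(involutive_at \<Omega> V x \<longleftrightarrow>
            (\<forall>i\<in>{1..k}. \<forall>j\<in>{1..k}. lie_bracket (v i) (v j) x \<in> V x))
       \<and> ((\<forall>i\<in>{1..k}. \<forall>j\<in>{1..k}. lie_bracket (v i) (v j) x \<in> V x) \<longleftrightarrow>
            (\<forall>i\<in>{1..k}. \<forall>j\<in>{1..k}. \<exists>w\<in>V x.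
               mv_div (\<lambda>y. wedge (vec_mv (v i y)) (vec_mv (v j y))) x = vec_mv w))
       \<and> (involutive_at \<Omega> V x \<longleftrightarrow>
            mv_span (k - 1) (mv_div (\<lambda>y. wedge_list (map (\<lambda>i. vec_mv (v i y)) [1..<k+1])) x) \<subseteq> V x)
       \<and> (involutive_at \<Omega> V x \<longleftrightarrow>
            (\<forall>I. card I + 2 = k \<longrightarrow>
               wedge (wedge_list (map (\<lambda>i. vec_mv (v i x)) [1..<k+1]))
                 (mv_interior (mv_div (\<lambda>y. wedge_list (map (\<lambda>i. vec_mv (v i y)) [1..<k+1])) x) (dxI I))
               = 0))"
proof -
  note op = assms(1) and C1 = assms(2) and indep = assms(3) and VV = assms(4) and x = assms(5)
  define S where "S = {1..k}"
  define xs where "xs = [1..<k+1]"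
  define g where "g i = v i x" for i
  have setxs: "set xs = S" unfolding xs_def S_def by auto
  have dist: "distinct xs" unfolding xs_def by simp
  have lenxs: "length xs = k" unfolding xs_def by simp
  have n0: "0 \<notin> set xs" unfolding xs_def by simp
  have fin: "finite S" unfolding S_def by simp
  have dv: "\<forall>i\<in>S. v i differentiable (at x)"
    using C1 C1_deriv x unfolding S_def differentiable_def by blast
  have dvx: "\<forall>i\<in>set xs. v i differentiable (at x)" using dv setxs by simp
  have indx: "\<forall>c. (\<Sum>i\<in>S. c i *\<^sub>R g i) = 0 \<longrightarrow> (\<forall>i\<in>S. c i = 0)"
    using indep x unfolding S_def g_def by simp
  have dual: "dual_on g (set xs)" using dual_exists[OF indx fin] setxs by simp
  have dual': "dual_on (\<lambda>i. v i x) (set xs)" using dual unfolding g_def .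
  have Vx: "V x = span (g ` S)" using VV x unfolding S_def g_def by simp
  have subV: "subspace (V x)" unfolding Vx by (rule subspace_span)
  have gV: "\<forall>i\<in>S. g i \<in> V x" unfolding Vx by (auto intro: span_base)
  define u where "u = uu v x xs"
  have ueq: "mv_div (\<lambda>y. wedge_list (map (\<lambda>i. vec_mv (v i y)) [1..<k+1])) x = u"
    unfolding u_def uu_def aw_def xs_def ..
  have Aeq: "wedge_list (map (\<lambda>i. vec_mv (v i x)) [1..<k+1]) = aw g xs"
    unfolding aw_def xs_def g_def ..
  have homu: "homog (k - 1) u" using homog_uu[OF dvx] lenxs unfolding u_def by simp
  define BR where "BR \<longleftrightarrow> (\<forall>i\<in>{1..k}. \<forall>j\<in>{1..k}. lie_bracket (v i) (v j) x \<in> V x)"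
  define W where "W \<longleftrightarrow> (\<forall>\<gamma>. (\<forall>z\<in>V x. z \<bullet> \<gamma> = 0) \<longrightarrow> mv_interior u (vm \<gamma>) = 0)"
  have orthg: "\<forall>i\<in>set xs. v i x \<bullet> \<gamma> = 0" if "\<forall>z\<in>V x. z \<bullet> \<gamma> = 0" for \<gamma>
    using that gV setxs unfolding g_def by auto
  have INV: "involutive_at \<Omega> V x \<longleftrightarrow> BR"
  proof
    assume inv: "involutive_at \<Omega> V x"
    show BR unfolding BR_def
    proof (intro ballI)
      fix i j assume i: "i \<in> {1..k}" and j: "j \<in> {1..k}"
      have t: "\<forall>y\<in>\<Omega>. v i y \<in> V y \<and> v j y \<in> V y" using VV i j by (auto intro: span_base)
      show "lie_bracket (v i) (v j) x \<in> V x"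
        using inv t C1 i j unfolding involutive_at_def by blast
    qed
  next
    assume BR then show "involutive_at \<Omega> V x"
      unfolding BR_def by (rule invol_from_br[OF op C1 indep VV x])
  qed
  have BRL: "u \<in> Lambda (k - 1) (V x)" if BR
  proof -
    have "uu v x xs \<in> Lambda (length xs - 1) (V x)"
      by (rule uu_Lambda[OF dvx subV]) (use gV setxs \<open>BR\<close> in \<open>auto simp: BR_def S_def g_def\<close>)
    then show ?thesis using lenxs unfolding u_def by simp
  qed
  have BRW: "W" if BR
    unfolding W_def using Lambda_interior_zero BRL[OF that] by blast
  have WBR: "BR" if W
    unfolding BR_def
  proof (intro ballI)
    fix i j assume i: "i \<in> {1..k}" and j: "j \<in> {1..k}"
    show "lie_bracket (v i) (v j) x \<in> V x"
    proof (rule orth_complement_mem[OF subV])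
      fix \<gamma> assume g0: "\<forall>z\<in>V x. z \<bullet> \<gamma> = 0"
      have "mv_interior (uu v x xs) (vm \<gamma>) = 0" using \<open>W\<close> g0 unfolding W_def u_def by blast
      then have "\<forall>p\<in>set xs. \<forall>q\<in>set xs. lie_bracket (v p) (v q) x \<bullet> \<gamma> = 0"
        by (intro uu_P2[OF dvx orthg[OF g0] dist dual'])
      then show "lie_bracket (v i) (v j) x \<bullet> \<gamma> = 0" using i j setxs unfolding S_def by auto
    qed
  qed
  have C2: "BR \<longleftrightarrow> (\<forall>i\<in>{1..k}. \<forall>j\<in>{1..k}. \<exists>w\<in>V x.
               mv_div (\<lambda>y. wedge (vec_mv (v i y)) (vec_mv (v j y))) x = vec_mv w)"
  proof -
    have "(lie_bracket (v i) (v j) x \<in> V x) \<longleftrightarrow> (\<exists>w\<in>V x. mv_div (\<lambda>y. wedge (vec_mv (v i y)) (vec_mv (v j y))) x = vec_mv w)"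
      if i: "i \<in> {1..k}" and j: "j \<in> {1..k}" for i j
    proof -
      define cc where "cc = divv (v i) x *\<^sub>R v j x - divv (v j) x *\<^sub>R v i x - lie_bracket (v i) (v j) x"
      have md: "mv_div (\<lambda>y. wedge (vec_mv (v i y)) (vec_mv (v j y))) x = vm cc"
        unfolding cc_def by (rule div_pair) (use dv i j in \<open>auto simp: S_def\<close>)
      have vi: "v i x \<in> V x" and vj: "v j x \<in> V x" using gV i j unfolding S_def g_def by auto
      have "(\<exists>w\<in>V x. vm cc = vm w) \<longleftrightarrow> cc \<in> V x" using vm_inj by blast
      also have "cc \<in> V x \<longleftrightarrow> lie_bracket (v i) (v j) x \<in> V x"
      proof
        assume "cc \<in> V x"
        moreover have "lie_bracket (v i) (v j) x = divv (v i) x *\<^sub>R v j x - divv (v j) x *\<^sub>R v i x - cc"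
          unfolding cc_def by simp
        ultimately show "lie_bracket (v i) (v j) x \<in> V x"
          using vi vj subV by (simp add: subspace_diff subspace_scale)
      next
        assume "lie_bracket (v i) (v j) x \<in> V x"
        then show "cc \<in> V x" unfolding cc_def using vi vj subV by (simp add: subspace_diff subspace_scale)
      qed
      finally show ?thesis using md by simp
    qed
    then show ?thesis unfolding BR_def by blast
  qed
  have IIIW: "W" if III: "mv_span (k - 1) u \<subseteq> V x"
    unfolding W_def
  proof (intro allI impI)
    fix \<gamma> assume g0: "\<forall>z\<in>V x. z \<bullet> \<gamma> = 0"
    show "mv_interior u (vm \<gamma>) = 0"
    proof (rule vec_eqI')
      fix J
      have "zc u J \<in> mv_span (k - 1) u"
        unfolding mv_span_def
      proof (intro InterI, clarify)
        fix Z assume Z: "subspace Z" "u \<in> Lambda (k - 1) Z"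
        show "zc u J \<in> Z"
        proof (rule orth_complement_mem[OF Z(1)])
          fix \<delta> assume "\<forall>z\<in>Z. z \<bullet> \<delta> = 0"
          then have "mv_interior u (vm \<delta>) = 0" using Lambda_interior_zero Z(2) by blast
          then have "(-1) ^ card J * (\<delta> \<bullet> zc u J) = 0" using interior_gamma[of u \<delta> J] by simp
          then show "zc u J \<bullet> \<delta> = 0" by (simp add: inner_commute)
        qed
      qed
      then have "zc u J \<bullet> \<gamma> = 0" using III g0 by blast
      then show "mv_interior u (vm \<gamma>) $ J = 0 $ J" by (simp add: interior_gamma inner_commute)
    qed
  qed
  have C3: "BR \<longleftrightarrow> mv_span (k - 1) u \<subseteq> V x"
    using mv_span_le[OF subV BRL] IIIW WBR by blast
  have WIV: "\<forall>I. card I + 2 = k \<longrightarrow> wedge (aw g xs) (mv_interior u (dxI I)) = 0" if W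
  proof (intro allI impI)
    fix I :: "'n set" assume cI: "card I + 2 = k"
    have "k - 1 = Suc (card I)" using cI by simp
    then have "homog (Suc (card I)) u" using homu by simp
    then have e: "mv_interior u (dxI I) = vm (zc u I)" by (rule interior_dxI_vm)
    have "zc u I \<in> V x"
    proof (rule orth_complement_mem[OF subV])
      fix \<gamma> assume "\<forall>z\<in>V x. z \<bullet> \<gamma> = 0"
      then have "mv_interior u (vm \<gamma>) = 0" using \<open>W\<close> unfolding W_def by blast
      then have "(-1) ^ card I * (\<gamma> \<bullet> zc u I) = 0" using interior_gamma[of u \<gamma> I] by simp
      then show "zc u I \<bullet> \<gamma> = 0" by (simp add: inner_commute)
    qed
    then have "zc u I \<in> span (g ` set xs)" using Vx setxs by simp
    then show "wedge (aw g xs) (mv_interior u (dxI I)) = 0" unfolding e by (rule aw_wedge_span)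
  qed
  have IVW: "W" if IV: "\<forall>I. card I + 2 = k \<longrightarrow> wedge (aw g xs) (mv_interior u (dxI I)) = 0"
    unfolding W_def
  proof (intro allI impI)
    fix \<gamma> assume g0: "\<forall>z\<in>V x. z \<bullet> \<gamma> = 0"
    show "mv_interior u (vm \<gamma>) = 0"
    proof (cases "k \<le> 1")
      case True
      then have "homog 0 u" using homu by simp
      then show ?thesis by (rule homog0_interior)
    next
      case False
      have hg: "homog (k - 1 - 1) (mv_interior u (vm \<gamma>))" using homog_interior[OF homu] .
      show ?thesis
      proof (rule vec_eqI')
        fix J :: "'n set"
        show "mv_interior u (vm \<gamma>) $ J = 0 $ J"
        proof (cases "card J + 2 = k")
          case True
          have "k - 1 = Suc (card J)" using True by simp
          then have "homog (Suc (card J)) u" using homu by simp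
          then have e: "mv_interior u (dxI J) = vm (zc u J)" by (rule interior_dxI_vm)
          have "wedge (aw g xs) (mv_interior u (dxI J)) = 0" using IV True by blast
          then have "wedge (aw g xs) (vm (zc u J)) = 0" unfolding e .
          moreover have ind2: "\<forall>c. (\<Sum>i\<in>set xs. c i *\<^sub>R g i) = 0 \<longrightarrow> (\<forall>i\<in>set xs. c i = 0)"
            using indx setxs by simp
          ultimately have "zc u J \<in> span (g ` set xs)"
            using aw_wedge_zero_span[OF dist n0 ind2] by blast
          then have "zc u J \<in> V x" using Vx setxs by simp
          then have "zc u J \<bullet> \<gamma> = 0" using g0 by blast
          then show ?thesis by (simp add: interior_gamma inner_commute)
        next
          case False
          then have "card J \<noteq> k - 1 - 1" using \<open>\<not> k \<le> 1\<close> by linarith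
          then show ?thesis using hg unfolding homog_def by simp
        qed
      qed
    qed
  qed
  have c3: "involutive_at \<Omega> V x \<longleftrightarrow> mv_span (k - 1) u \<subseteq> V x" using INV C3 by simp
  have c4: "involutive_at \<Omega> V x \<longleftrightarrow> (\<forall>I. card I + 2 = k \<longrightarrow> wedge (aw g xs) (mv_interior u (dxI I)) = 0)"
  proof
    assume "involutive_at \<Omega> V x"
    then have BR using INV by simp
    then show "\<forall>I. card I + 2 = k \<longrightarrow> wedge (aw g xs) (mv_interior u (dxI I)) = 0"
      by (intro WIV BRW)
  next
    assume "\<forall>I. card I + 2 = k \<longrightarrow> wedge (aw g xs) (mv_interior u (dxI I)) = 0"
    then have W by (rule IVW)
    then have BR by (rule WBR)
    then show "involutive_at \<Omega> V x" using INV by simp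
  qed
  have c1: "involutive_at \<Omega> V x \<longleftrightarrow> (\<forall>i\<in>{1..k}. \<forall>j\<in>{1..k}. lie_bracket (v i) (v j) x \<in> V x)"
    using INV unfolding BR_def .
  have c2: "(\<forall>i\<in>{1..k}. \<forall>j\<in>{1..k}. lie_bracket (v i) (v j) x \<in> V x) \<longleftrightarrow> (\<forall>i\<in>{1..k}. \<forall>j\<in>{1..k}. \<exists>w\<in>V x.
               mv_div (\<lambda>y. wedge (vec_mv (v i y)) (vec_mv (v j y))) x = vec_mv w)"
    using C2 unfolding BR_def .
  show ?thesis
    unfolding ueq Aeq using c1 c2 c3 c4 by (intro conjI)
qed

end
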